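(* Let $f$ be a piecewise expanding unimodal map. Then there exists $\epsilon>0$ such that $f$ is $\epsilon$-expansive. If furthermore $f$ is good, then there exists $\epsilon>0$ such that $f$ is stably $\epsilon$-expansive.
   Context: Let $I=[-1,1]$ and $c=0$. $\mathcal B^1(I)$ is the Banach space of continuous $f:I\to\mathbb R$ that are $C^1$ on $[-1,0]$ and on $[0,1]$ with $f(1)=f(-1)$, normed by $|f|_1=\max\{|f|_{C^1[-1,0]},|f|_{C^1[0,1]}\}$ where $|f|_{C^1(Q)}=\max(\sup_Q|f|,\sup_Q|Df|)$. A piecewise expanding unimodal map is an $f\in\mathcal B^1(I)$ with $f(-1)=f(1)=-1$, $\inf_{x\in[-1,0]}Df(x)>1$, $\sup_{x\in[0,1]}Df(x)<-1$ and $f(0)\le1$. Such $f$ is good if either $c$ is not periodic, or $c$ has prime period $p\ge2$ and $|Df^{p-1}(f(c))|\min\{|Df^+(c)|,|Df^-(c)|\}>2$ ($Df^\pm(c)$ the one-sided derivatives at $c$). A map $f:I\to I$ is $\epsilon$-expansive if for every interval $L\subset I$ of positive length there is $i\ge1$ with $|f^i(L)|>\epsilon$. A piecewise expanding unimodal map $f_0$ is stably $\epsilon$-expansive if every piecewise expanding unimodal map $f$ sufficiently close to $f_0$ in $|\cdot|_1$ is $\epsilon$-expansive. *)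

theory Defs
  imports "HOL-Analysis.Analysis"
begin

text \<open>The interval I = [-1,1], critical point c = 0. Maps are modelled as
  real functions; only their values on I matter.\<close>

text \<open>Derivative of f at x relative to the (nondegenerate) interval Q
  (one-sided at the endpoints of Q).\<close>
definition dQ :: "real set \<Rightarrow> (real \<Rightarrow> real) \<Rightarrow> real \<Rightarrow> real" where
  "dQ Q f x = (SOME d. (f has_real_derivative d) (at x within Q))"

definition C1_on :: "real set \<Rightarrow> (real \<Rightarrow> real) \<Rightarrow> bool" where
  "C1_on Q f \<longleftrightarrow> (\<exists>g. continuous_on Q g \<and>
      (\<forall>x\<in>Q. (f has_real_derivative g x) (at x within Q)))"

definition B1 :: "(real \<Rightarrow> real) \<Rightarrow> bool" where
  "B1 f \<longleftrightarrow> continuous_on {-1..1} f \<and> C1_on {-1..0} f \<and> C1_on {0..1} f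
      \<and> f 1 = f (-1)"

definition C1norm :: "real set \<Rightarrow> (real \<Rightarrow> real) \<Rightarrow> real" where
  "C1norm Q h = max (SUP x\<in>Q. \<bar>h x\<bar>) (SUP x\<in>Q. \<bar>dQ Q h x\<bar>)"

definition norm1 :: "(real \<Rightarrow> real) \<Rightarrow> real" where
  "norm1 h = max (C1norm {-1..0} h) (C1norm {0..1} h)"

definition pw_exp_unimodal :: "(real \<Rightarrow> real) \<Rightarrow> bool" where
  "pw_exp_unimodal f \<longleftrightarrow> B1 f \<and> f (-1) = -1 \<and> f 1 = -1
     \<and> (INF x\<in>{-1..0}. dQ {-1..0} f x) > 1
     \<and> (SUP x\<in>{0..1}. dQ {0..1} f x) < -1
     \<and> f 0 \<le> 1"

definition prime_period :: "(real \<Rightarrow> real) \<Rightarrow> real \<Rightarrow> nat \<Rightarrow> bool" where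
  "prime_period f x p \<longleftrightarrow> p \<ge> 1 \<and> (f ^^ p) x = x \<and> (\<forall>k. 1 \<le> k \<and> k < p \<longrightarrow> (f ^^ k) x \<noteq> x)"

definition periodic_pt :: "(real \<Rightarrow> real) \<Rightarrow> real \<Rightarrow> bool" where
  "periodic_pt f x \<longleftrightarrow> (\<exists>n\<ge>1. (f ^^ n) x = x)"

definition good :: "(real \<Rightarrow> real) \<Rightarrow> bool" where
  "good f \<longleftrightarrow> \<not> periodic_pt f 0 \<or>
     (\<exists>p. p \<ge> 2 \<and> prime_period f 0 p \<and>
        \<bar>deriv (f ^^ (p - 1)) (f 0)\<bar> * min \<bar>dQ {0..1} f 0\<bar> \<bar>dQ {-1..0} f 0\<bar> > 2)"

definition expansive :: "real \<Rightarrow> (real \<Rightarrow> real) \<Rightarrow> bool" where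
  "expansive \<epsilon> f \<longleftrightarrow> (\<forall>L. is_interval L \<and> L \<subseteq> {-1..1} \<and> diameter L > 0 \<longrightarrow>
      (\<exists>i\<ge>1. diameter ((f ^^ i) ` L) > \<epsilon>))"

definition stably_expansive :: "real \<Rightarrow> (real \<Rightarrow> real) \<Rightarrow> bool" where
  "stably_expansive \<epsilon> f0 \<longleftrightarrow> (\<exists>\<delta>>0. \<forall>f. pw_exp_unimodal f \<and> norm1 (\<lambda>x. f x - f0 x) < \<delta>
      \<longrightarrow> expansive \<epsilon> f)"

end

theory Submission
  imports Defs
begin

lemma deriv_Icc_unique:
  fixes a b x D E :: real
  assumes "a < b" "x \<in> {a..b}"
    "(f has_real_derivative D) (at x within {a..b})"
    "(f has_real_derivative E) (at x within {a..b})"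
  shows "D = E"
proof -
  have "(\<lambda>h. D * h) = (\<lambda>h. E * h)"
    apply (rule frechet_derivative_unique_within_closed_interval[of a b x f])
    using assms by (auto simp: has_field_derivative_def)
  then show ?thesis by (metis mult_1_right)
qed

lemma dQ_eq:
  fixes a b x D :: real
  assumes "a < b" "x \<in> {a..b}" "(f has_real_derivative D) (at x within {a..b})"
  shows "dQ {a..b} f x = D"
proof -
  have "(f has_real_derivative dQ {a..b} f x) (at x within {a..b})"
    unfolding dQ_def using assms(3) by (rule someI)
  then show ?thesis using deriv_Icc_unique assms by blast
qed

lemma C1_onD:
  fixes a b :: real
  assumes "C1_on {a..b} f" "a < b"
  shows "continuous_on {a..b} (dQ {a..b} f)"
    "\<And>x. x \<in> {a..b} \<Longrightarrow> (f has_real_derivative dQ {a..b} f x) (at x within {a..b})"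
proof -
  obtain g where g: "continuous_on {a..b} g" "\<forall>x\<in>{a..b}. (f has_real_derivative g x) (at x within {a..b})"
    using assms(1) unfolding C1_on_def by blast
  have eq: "\<And>x. x \<in> {a..b} \<Longrightarrow> dQ {a..b} f x = g x" using dQ_eq g assms(2) by blast
  have "continuous_on {a..b} (dQ {a..b} f) = continuous_on {a..b} g"
    by (rule continuous_on_cong[OF refl eq])
  with g(1) show "continuous_on {a..b} (dQ {a..b} f)" by simp
  show "\<And>x. x \<in> {a..b} \<Longrightarrow> (f has_real_derivative dQ {a..b} f x) (at x within {a..b})"
    using g eq by auto
qed

lemma cont_bdd:
  fixes h :: "real \<Rightarrow> real"
  assumes "continuous_on {a..b} h"
  shows "bdd_below (h ` {a..b})" "bdd_above (h ` {a..b})"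
proof -
  have "bounded (h ` {a..b})" using compact_continuous_image[OF assms] compact_imp_bounded by blast
  then show "bdd_below (h ` {a..b})" "bdd_above (h ` {a..b})"
    by (rule bounded_imp_bdd_below, rule bounded_imp_bdd_above)
qed

lemma slope_lower:
  fixes g D :: "real \<Rightarrow> real"
  assumes "x \<le> y" "continuous_on {x..y} g"
    "\<And>z. x < z \<Longrightarrow> z < y \<Longrightarrow> (g has_real_derivative D z) (at z) \<and> D z \<ge> c"
  shows "g y - g x \<ge> c * (y - x)"
proof (cases "x = y")
  case False
  then have "x < y" using assms by auto
  from MVT[OF this assms(2)] obtain l z where lz: "x < z" "z < y" "DERIV g z :> l" "g y - g x = (y - x) * l"
    using assms(3) real_differentiable_def by blast
  have "l = D z" using assms(3)[OF lz(1,2)] lz(3) DERIV_unique by blast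
  with assms(3)[OF lz(1,2)] lz \<open>x<y\<close> show ?thesis by (simp add: mult.commute mult_left_mono)
qed simp

lemma slope_upper:
  fixes g D :: "real \<Rightarrow> real"
  assumes "x \<le> y" "continuous_on {x..y} g"
    "\<And>z. x < z \<Longrightarrow> z < y \<Longrightarrow> (g has_real_derivative D z) (at z) \<and> D z \<le> c"
  shows "g x - g y \<ge> (-c) * (y - x)"
proof -
  have "(\<lambda>x. - g x) y - (\<lambda>x. - g x) x \<ge> (-c) * (y - x)"
  proof (rule slope_lower[of x y "\<lambda>x. - g x" "\<lambda>z. - D z"])
    show "x \<le> y" by fact
    show "continuous_on {x..y} (\<lambda>x. - g x)" using assms(2) by (rule continuous_on_minus)
    fix z assume "x < z" "z < y"
    then have d: "(g has_real_derivative D z) (at z)" "D z \<le> c" using assms(3) by auto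
    then show "((\<lambda>x. - g x) has_real_derivative - D z) (at z) \<and> - c \<le> - D z"
      using DERIV_minus[OF d(1)] d(2) by auto
  qed
  then show ?thesis by simp
qed

definition expd :: "real \<Rightarrow> (real \<Rightarrow> real) \<Rightarrow> bool" where
 "expd l g \<longleftrightarrow> continuous_on {-1..1} g \<and> g (-1) = -1 \<and> g 1 = -1 \<and> g 0 \<le> 1
   \<and> (\<forall>x y. -1 \<le> x \<longrightarrow> x \<le> y \<longrightarrow> y \<le> 0 \<longrightarrow> g y - g x \<ge> l*(y-x))
   \<and> (\<forall>x y. 0 \<le> x \<longrightarrow> x \<le> y \<longrightarrow> y \<le> 1 \<longrightarrow> g x - g y \<ge> l*(y-x))"

lemma expdD:
  assumes "expd l g"
  shows "continuous_on {-1..1} g" "g (-1) = -1" "g 1 = -1" "g 0 \<le> 1"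
    "\<And>x y. -1 \<le> x \<Longrightarrow> x \<le> y \<Longrightarrow> y \<le> 0 \<Longrightarrow> g y - g x \<ge> l*(y-x)"
    "\<And>x y. 0 \<le> x \<Longrightarrow> x \<le> y \<Longrightarrow> y \<le> 1 \<Longrightarrow> g x - g y \<ge> l*(y-x)"
  using assms unfolding expd_def by blast+

lemma expd_maps:
  assumes "expd l g" "l \<ge> 0" "x \<in> {-1..1}"
  shows "g x \<in> {-1..1}" "g x \<le> g 0"
proof -
  have A: "g x \<ge> -1 \<and> g x \<le> g 0"
  proof (cases "x \<le> 0")
    case True
    have "g x - g (-1) \<ge> l*(x-(-1))" using expdD(5)[OF assms(1), of "-1" x] True assms(3) by simp
    moreover have "g 0 - g x \<ge> l*(0-x)" using expdD(5)[OF assms(1), of x 0] True assms(3) by simp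
    moreover have "l*(x-(-1)) \<ge> 0" "l*(0-x) \<ge> 0" using True assms by (intro mult_nonneg_nonneg; simp)+
    ultimately show ?thesis using expdD(2)[OF assms(1)] by linarith
  next
    case False
    have "g x - g 1 \<ge> l*(1-x)" using expdD(6)[OF assms(1), of x 1] False assms(3) by simp
    moreover have "g 0 - g x \<ge> l*(x-0)" using expdD(6)[OF assms(1), of 0 x] False assms(3) by simp
    moreover have "l*(1-x) \<ge> 0" "l*(x-0) \<ge> 0" using False assms by (intro mult_nonneg_nonneg; simp)+
    ultimately show ?thesis using expdD(3)[OF assms(1)] by linarith
  qed
  then show "g x \<in> {-1..1}" "g x \<le> g 0" using expdD(4)[OF assms(1)] by auto
qed

lemma expd_funpow_maps:
  assumes "expd l g" "l \<ge> 0" "x \<in> {-1..1}"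
  shows "(g^^n) x \<in> {-1..1}"
proof (induction n)
  case 0 show ?case using assms(3) by simp
next
  case (Suc n) then show ?case using expd_maps(1)[OF assms(1,2)] by simp
qed

lemma expd_cont_funpow:
  assumes "expd l g" "l \<ge> 0"
  shows "continuous_on {-1..1} (g^^n)"
proof (induction n)
  case 0 then show ?case by (simp add: continuous_on_id)
next
  case (Suc n)
  have "(g^^n) ` {-1..1} \<subseteq> {-1..1}" using expd_funpow_maps assms by blast
  then have "continuous_on ((g^^n) ` {-1..1}) g" using expdD(1)[OF assms(1)] continuous_on_subset by blast
  then have "continuous_on {-1..1} (g \<circ> (g^^n))" using continuous_on_compose Suc.IH by blast
  then show ?case by simp
qed

lemma funpow_img_Suc: "(g^^Suc n) ` S = g ` ((g^^n) ` S)"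
  by (simp add: image_comp)

lemma funpow_img_add: "(g^^(n+k)) ` S = (g^^k) ` ((g^^n) ` S)"
  by (simp add: image_comp funpow_add add.commute[of n k])

lemma funpow_add_apply: "(g^^(n+k)) x = (g^^k) ((g^^n) x)"
  by (simp add: funpow_add add.commute[of n k])

lemma expd_J_interval:
  assumes "expd l g" "l \<ge> 0" "{a..b} \<subseteq> {-1..1::real}" "a \<le> b"
  shows "\<exists>u v. (g^^n) ` {a..b} = {u..v} \<and> u \<le> v \<and> {u..v} \<subseteq> {-1..1}"
proof -
  have "continuous_on {a..b} (g^^n)"
    using expd_cont_funpow[OF assms(1,2)] assms(3) continuous_on_subset by blast
  then obtain u v where uv: "(g^^n) ` {a..b} = {u..v}" "u \<le> v"
    using continuous_image_closed_interval[OF assms(4)] by blast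
  moreover have "{u..v} \<subseteq> {-1..1}"
  proof
    fix y assume "y \<in> {u..v}"
    then have "y \<in> (g^^n) ` {a..b}" using uv(1) by simp
    then obtain x where "x \<in> {a..b}" "y = (g^^n) x" by blast
    then show "y \<in> {-1..1}" using assms(3) expd_funpow_maps[OF assms(1,2)] by blast
  qed
  ultimately show ?thesis by blast
qed

lemma diam_img_ge:
  assumes "expd l g" "{u..v} \<subseteq> {-1..1::real}" "x \<in> {u..v}" "y \<in> {u..v}"
  shows "\<bar>g x - g y\<bar> \<le> diameter (g ` {u..v})"
proof -
  have "continuous_on {u..v} g" using assms expdD(1)[OF assms(1)] continuous_on_subset by blast
  then have "bounded (g ` {u..v})" using compact_continuous_image compact_imp_bounded by blast
  then have "dist (g x) (g y) \<le> diameter (g ` {u..v})"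
    using diameter_bounded_bound assms by blast
  then show ?thesis by (simp add: dist_real_def)
qed

lemma step_one:
  assumes "expd l g" "u \<le> v" "{u..v} \<subseteq> {-1..0::real} \<or> {u..v} \<subseteq> {0..1}"
  shows "diameter (g ` {u..v}) \<ge> l * (v - u)"
  using assms(3)
proof
  assume A: "{u..v} \<subseteq> {-1..0}"
  then have uv: "-1 \<le> u" "v \<le> 0" using assms(2) by auto
  have "g v - g u \<ge> l*(v-u)" using expdD(5)[OF assms(1) uv(1) assms(2) uv(2)] .
  moreover have "\<bar>g v - g u\<bar> \<le> diameter (g ` {u..v})"
    apply (rule diam_img_ge[OF assms(1)]) using A assms(2) by auto
  ultimately show ?thesis by linarith
next
  assume A: "{u..v} \<subseteq> {0..1}"
  then have uv: "0 \<le> u" "v \<le> 1" using assms(2) by auto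
  have "g u - g v \<ge> l*(v-u)" using expdD(6)[OF assms(1) uv(1) assms(2) uv(2)] .
  moreover have "\<bar>g u - g v\<bar> \<le> diameter (g ` {u..v})"
    apply (rule diam_img_ge[OF assms(1)]) using A assms(2) by auto
  ultimately show ?thesis by linarith
qed

lemma step_fold:
  assumes "expd l g" "u \<le> 0" "0 \<le> v" "{u..v} \<subseteq> {-1..1::real}"
  shows "diameter (g ` {u..v}) \<ge> l / 2 * (v - u)"
proof -
  have uv: "-1 \<le> u" "v \<le> 1" using assms by auto
  have "g 0 - g u \<ge> l*(0-u)" using expdD(5)[OF assms(1) uv(1) assms(2)] by simp
  moreover have "g 0 - g v \<ge> l*(v-0)" using expdD(6)[OF assms(1) _ assms(3) uv(2)] by simp
  moreover have "\<bar>g 0 - g u\<bar> \<le> diameter (g ` {u..v})" "\<bar>g 0 - g v\<bar> \<le> diameter (g ` {u..v})"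
    using diam_img_ge[OF assms(1,4)] assms(2,3) by auto
  ultimately have "diameter (g ` {u..v}) \<ge> l*(0-u)" "diameter (g ` {u..v}) \<ge> l*(v-0)" by linarith+
  then have "2 * diameter (g ` {u..v}) \<ge> l * (v - u)" by (simp add: algebra_simps)
  then show ?thesis by simp
qed

lemma growth_contra:
  fixes l :: "nat \<Rightarrow> real"
  assumes "l 0 > 0" "\<forall>n. l n \<le> \<epsilon>" "\<theta> > 1" "\<forall>i. \<exists>j>i. l j \<ge> \<theta> * l i"
  shows False
proof -
  have "\<exists>j. l j \<ge> \<theta>^m * l 0" for m
  proof (induction m)
    case 0 show ?case by auto
  next
    case (Suc m)
    then obtain j where j: "l j \<ge> \<theta>^m * l 0" by auto
    obtain j' where "l j' \<ge> \<theta> * l j" using assms(4) by blast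
    moreover have "\<theta> * l j \<ge> \<theta> * (\<theta>^m * l 0)" using j assms(3) by (simp add: mult_left_mono)
    ultimately have "\<theta> * (\<theta>^m * l 0) \<le> l j'" by linarith
    then show ?case by (metis mult.assoc power_Suc)
  qed
  moreover obtain m where "\<epsilon> / l 0 < \<theta>^m" using real_arch_pow assms(3) by blast
  then have "\<epsilon> < \<theta>^m * l 0" using assms(1) by (simp add: pos_divide_less_eq)
  ultimately show False using assms(2) by (meson not_le order_trans)
qed

lemma expansive_crit:
  assumes g: "expd l g" "l \<ge> 0" "\<epsilon> > 0" "\<theta> > 1"
  and block: "\<And>a b. a < b \<Longrightarrow> {a..b} \<subseteq> {-1..1} \<Longrightarrow> (\<forall>n. diameter ((g^^n)`{a..b}) \<le> \<epsilon>) \<Longrightarrow>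
     \<forall>i. \<exists>j>i. diameter ((g^^j)`{a..b}) \<ge> \<theta> * diameter ((g^^i)`{a..b})"
  shows "expansive \<epsilon> g"
  unfolding expansive_def
proof (intro allI impI)
  fix L :: "real set" assume L: "is_interval L \<and> L \<subseteq> {-1..1} \<and> diameter L > 0"
  show "\<exists>i\<ge>1. diameter ((g^^i)`L) > \<epsilon>"
  proof (rule ccontr)
    assume H: "\<not> ?thesis"
    have "\<exists>x\<in>L. \<exists>y\<in>L. x < y"
    proof (rule ccontr)
      assume "\<not> ?thesis"
      then have eq: "\<And>x y. x \<in> L \<Longrightarrow> y \<in> L \<Longrightarrow> x = y" by (metis neq_iff)
      have "diameter L = 0"
      proof (cases "L = {}")
        case True then show ?thesis by simp
      next
        case False
        then obtain c where "c \<in> L" by blast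
        then have "L = {c}" using eq by blast
        then show ?thesis by simp
      qed
      then show False using L by simp
    qed
    then obtain x y where xy: "x \<in> L" "y \<in> L" "x < y" by blast
    define b where "b = min y (x + \<epsilon>)"
    have ab: "x < b" "b - x \<le> \<epsilon>" using xy g unfolding b_def by auto
    have sub: "{x..b} \<subseteq> L"
    proof
      fix z assume "z \<in> {x..b}"
      then have "x \<le> z" "z \<le> y" unfolding b_def by auto
      then show "z \<in> L" using L xy(1,2) unfolding is_interval_1 by blast
    qed
    have Lsub: "L \<subseteq> {-1..1}" using L by blast
    have bnd: "\<forall>n. diameter ((g^^n)`{x..b}) \<le> \<epsilon>"
    proof
      fix n show "diameter ((g^^n)`{x..b}) \<le> \<epsilon>"
      proof (cases n)
        case 0 then show ?thesis using ab by simp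
      next
        case (Suc m)
        have "bounded ((g^^n)`L)"
        proof (rule bounded_subset[of "{-1..1}"])
          show "(g^^n)`L \<subseteq> {-1..1}" using Lsub expd_funpow_maps[OF g(1,2)] by blast
        qed simp
        then have "diameter ((g^^n)`{x..b}) \<le> diameter ((g^^n)`L)"
          using diameter_subset image_mono[OF sub] by blast
        moreover have "n \<ge> 1" using Suc by simp
        then have "diameter ((g^^n)`L) \<le> \<epsilon>" using H not_le by blast
        ultimately show ?thesis by linarith
      qed
    qed
    have "{x..b} \<subseteq> {-1..1}" using sub Lsub by blast
    from block[OF ab(1) this bnd] have gr: "\<forall>i. \<exists>j>i. diameter ((g^^j)`{x..b}) \<ge> \<theta> * diameter ((g^^i)`{x..b})" .
    show False
      apply (rule growth_contra[of "\<lambda>n. diameter ((g^^n)`{x..b})" \<epsilon> \<theta>])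
      using ab(1) apply simp
      using bnd apply blast
      using g(4) apply simp
      using gr by blast
  qed
qed

lemma within_to_at:
  fixes a b z :: real
  assumes "(f has_real_derivative D) (at z within {a..b})" "a < z" "z < b"
  shows "(f has_real_derivative D) (at z)"
  using assms at_within_Icc_at by metis

lemma peu_basic:
  assumes "pw_exp_unimodal g"
  shows "continuous_on {-1..1} g" "g (-1) = -1" "g 1 = -1" "g 0 \<le> 1"
    "continuous_on {-1..0} (dQ {-1..0} g)" "continuous_on {0..1} (dQ {0..1} g)"
    "\<And>z. z \<in> {-1..0} \<Longrightarrow> (g has_real_derivative dQ {-1..0} g z) (at z within {-1..0})"
    "\<And>z. z \<in> {0..1} \<Longrightarrow> (g has_real_derivative dQ {0..1} g z) (at z within {0..1})"
    "\<And>z. -1 < z \<Longrightarrow> z < 0 \<Longrightarrow> (g has_real_derivative dQ {-1..0} g z) (at z)"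
    "\<And>z. 0 < z \<Longrightarrow> z < 1 \<Longrightarrow> (g has_real_derivative dQ {0..1} g z) (at z)"
proof -
  have B: "B1 g" and E: "g (-1) = -1" "g 1 = -1" "g 0 \<le> 1"
    using assms unfolding pw_exp_unimodal_def by auto
  then have C: "continuous_on {-1..1} g" "C1_on {-1..0} g" "C1_on {0..1} g"
    unfolding B1_def by auto
  show "continuous_on {-1..1} g" "g (-1) = -1" "g 1 = -1" "g 0 \<le> 1" using C E by auto
  show "continuous_on {-1..0} (dQ {-1..0} g)" "continuous_on {0..1} (dQ {0..1} g)"
    using C1_onD(1)[OF C(2)] C1_onD(1)[OF C(3)] by auto
  show L: "\<And>z. z \<in> {-1..0} \<Longrightarrow> (g has_real_derivative dQ {-1..0} g z) (at z within {-1..0})"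
    using C1_onD(2)[OF C(2)] by auto
  show R: "\<And>z. z \<in> {0..1} \<Longrightarrow> (g has_real_derivative dQ {0..1} g z) (at z within {0..1})"
    using C1_onD(2)[OF C(3)] by auto
  show "\<And>z. -1 < z \<Longrightarrow> z < 0 \<Longrightarrow> (g has_real_derivative dQ {-1..0} g z) (at z)"
  proof -
    fix z :: real assume "-1 < z" "z < 0"
    then show "(g has_real_derivative dQ {-1..0} g z) (at z)"
      using within_to_at[OF L] by auto
  qed
  show "\<And>z. 0 < z \<Longrightarrow> z < 1 \<Longrightarrow> (g has_real_derivative dQ {0..1} g z) (at z)"
  proof -
    fix z :: real assume "0 < z" "z < 1"
    then show "(g has_real_derivative dQ {0..1} g z) (at z)"
      using within_to_at[OF R] by auto
  qed
qed

lemma peu_Lambda: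
  assumes "pw_exp_unimodal f"
  shows "\<exists>\<Lambda>>1. (\<forall>x\<in>{-1..0}. dQ {-1..0} f x \<ge> \<Lambda>) \<and> (\<forall>x\<in>{0..1}. dQ {0..1} f x \<le> -\<Lambda>)"
proof -
  define A where "A = (INF x\<in>{-1..0}. dQ {-1..0} f x)"
  define B where "B = (SUP x\<in>{0..1}. dQ {0..1} f x)"
  have AB: "A > 1" "B < -1" using assms unfolding pw_exp_unimodal_def A_def B_def by auto
  have bl: "bdd_below (dQ {-1..0} f ` {-1..0})" using cont_bdd(1)[OF peu_basic(5)[OF assms]] .
  have br: "bdd_above (dQ {0..1} f ` {0..1})" using cont_bdd(2)[OF peu_basic(6)[OF assms]] .
  have "\<forall>x\<in>{-1..0}. dQ {-1..0} f x \<ge> A" unfolding A_def using bl by (auto intro: cINF_lower)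
  moreover have "\<forall>x\<in>{0..1}. dQ {0..1} f x \<le> B" unfolding B_def using br by (auto intro: cSUP_upper)
  ultimately show ?thesis using AB
    by (intro exI[of _ "min A (-B)"]) force
qed

lemma expd_from:
  assumes "continuous_on {-1..1} g" "g (-1) = -1" "g 1 = -1" "g 0 \<le> 1"
    "\<And>z. -1 < z \<Longrightarrow> z < 0 \<Longrightarrow> (g has_real_derivative Dl z) (at z) \<and> Dl z \<ge> c"
    "\<And>z. 0 < z \<Longrightarrow> z < 1 \<Longrightarrow> (g has_real_derivative Dr z) (at z) \<and> Dr z \<le> -c"
  shows "expd c g"
  unfolding expd_def
proof (intro conjI allI impI)
  show "continuous_on {-1..1} g" "g (-1) = -1" "g 1 = -1" "g 0 \<le> 1" using assms by auto
  fix x y :: real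
  {
    assume xy: "-1 \<le> x" "x \<le> y" "y \<le> 0"
    have "continuous_on {x..y} g" using continuous_on_subset[OF assms(1)] xy by auto
    then show "g y - g x \<ge> c*(y-x)"
      using slope_lower[of x y g Dl c] xy assms(5) by auto
  }
  {
    assume xy: "0 \<le> x" "x \<le> y" "y \<le> 1"
    have "continuous_on {x..y} g" using continuous_on_subset[OF assms(1)] xy by auto
    then show "g x - g y \<ge> c*(y-x)"
      using slope_upper[of x y g Dr "-c"] xy assms(6) by auto
  }
qed

lemma peu_expd:
  assumes "pw_exp_unimodal f"
  shows "\<exists>\<Lambda>>1. expd \<Lambda> f"
proof -
  obtain \<Lambda> where L: "\<Lambda> > 1" "\<forall>x\<in>{-1..0}. dQ {-1..0} f x \<ge> \<Lambda>" "\<forall>x\<in>{0..1}. dQ {0..1} f x \<le> -\<Lambda>"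
    using peu_Lambda[OF assms] by blast
  have "expd \<Lambda> f"
    apply (rule expd_from[of f "dQ {-1..0} f" _ "dQ {0..1} f"])
    using peu_basic[OF assms] L by auto
  then show ?thesis using L by blast
qed

lemma C1norm_ge:
  fixes a b :: real
  assumes "continuous_on {a..b} h" "continuous_on {a..b} (dQ {a..b} h)" "x \<in> {a..b}"
  shows "\<bar>h x\<bar> \<le> C1norm {a..b} h" "\<bar>dQ {a..b} h x\<bar> \<le> C1norm {a..b} h"
proof -
  have c1: "continuous_on {a..b} (\<lambda>x. \<bar>h x\<bar>)" using assms(1) by (intro continuous_intros)
  have c2: "continuous_on {a..b} (\<lambda>x. \<bar>dQ {a..b} h x\<bar>)" using assms(2) by (intro continuous_intros)
  have "\<bar>h x\<bar> \<le> (SUP x\<in>{a..b}. \<bar>h x\<bar>)" using cont_bdd(2)[OF c1] assms(3) by (auto intro: cSUP_upper)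
  then show "\<bar>h x\<bar> \<le> C1norm {a..b} h" unfolding C1norm_def by linarith
  have "\<bar>dQ {a..b} h x\<bar> \<le> (SUP x\<in>{a..b}. \<bar>dQ {a..b} h x\<bar>)" using cont_bdd(2)[OF c2] assms(3) by (auto intro: cSUP_upper)
  then show "\<bar>dQ {a..b} h x\<bar> \<le> C1norm {a..b} h" unfolding C1norm_def by linarith
qed

lemma close_side:
  fixes a b :: real
  assumes "a < b" "continuous_on {a..b} g" "continuous_on {a..b} f"
    "continuous_on {a..b} (dQ {a..b} g)" "continuous_on {a..b} (dQ {a..b} f)"
    "\<And>z. z \<in> {a..b} \<Longrightarrow> (g has_real_derivative dQ {a..b} g z) (at z within {a..b})"
    "\<And>z. z \<in> {a..b} \<Longrightarrow> (f has_real_derivative dQ {a..b} f z) (at z within {a..b})"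
    "x \<in> {a..b}"
  shows "\<bar>g x - f x\<bar> \<le> C1norm {a..b} (\<lambda>x. g x - f x)"
    "\<bar>dQ {a..b} g x - dQ {a..b} f x\<bar> \<le> C1norm {a..b} (\<lambda>x. g x - f x)"
proof -
  have eq: "dQ {a..b} (\<lambda>x. g x - f x) z = dQ {a..b} g z - dQ {a..b} f z" if "z \<in> {a..b}" for z
    using dQ_eq[OF assms(1) that DERIV_diff[OF assms(6)[OF that] assms(7)[OF that]]] .
  have c: "continuous_on {a..b} (dQ {a..b} (\<lambda>x. g x - f x))"
  proof -
    have "continuous_on {a..b} (\<lambda>z. dQ {a..b} g z - dQ {a..b} f z)"
      using assms(4,5) by (intro continuous_intros)
    moreover have "continuous_on {a..b} (dQ {a..b} (\<lambda>x. g x - f x)) = continuous_on {a..b} (\<lambda>z. dQ {a..b} g z - dQ {a..b} f z)"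
      by (rule continuous_on_cong[OF refl eq])
    ultimately show ?thesis by simp
  qed
  have c0: "continuous_on {a..b} (\<lambda>x. g x - f x)" using assms(2,3) by (intro continuous_intros)
  show "\<bar>g x - f x\<bar> \<le> C1norm {a..b} (\<lambda>x. g x - f x)"
    using C1norm_ge(1)[OF c0 c assms(8)] by simp
  show "\<bar>dQ {a..b} g x - dQ {a..b} f x\<bar> \<le> C1norm {a..b} (\<lambda>x. g x - f x)"
    using C1norm_ge(2)[OF c0 c assms(8)] eq[OF assms(8)] by simp
qed

lemma close_peu:
  assumes f: "pw_exp_unimodal f" and g: "pw_exp_unimodal g"
  shows "\<And>x. x \<in> {-1..1} \<Longrightarrow> \<bar>g x - f x\<bar> \<le> norm1 (\<lambda>x. g x - f x)"
    "\<And>x. x \<in> {-1..0} \<Longrightarrow> \<bar>dQ {-1..0} g x - dQ {-1..0} f x\<bar> \<le> norm1 (\<lambda>x. g x - f x)"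
    "\<And>x. x \<in> {0..1} \<Longrightarrow> \<bar>dQ {0..1} g x - dQ {0..1} f x\<bar> \<le> norm1 (\<lambda>x. g x - f x)"
proof -
  note F = peu_basic[OF f] and G = peu_basic[OF g]
  have s1: "{-1..0} \<subseteq> {-1..1::real}" and s2: "{0..1} \<subseteq> {-1..1::real}" by auto
  have cgl: "continuous_on {-1..0} g" "continuous_on {-1..0} f"
    using continuous_on_subset[OF G(1) s1] continuous_on_subset[OF F(1) s1] .
  have cgr: "continuous_on {0..1} g" "continuous_on {0..1} f"
    using continuous_on_subset[OF G(1) s2] continuous_on_subset[OF F(1) s2] .
  note L = close_side[of "-1" 0 g f, OF _ cgl G(5) F(5) G(7) F(7)]
  note R = close_side[of 0 1 g f, OF _ cgr G(6) F(6) G(8) F(8)]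
  have nl: "C1norm {-1..0} (\<lambda>x. g x - f x) \<le> norm1 (\<lambda>x. g x - f x)"
   and nr: "C1norm {0..1} (\<lambda>x. g x - f x) \<le> norm1 (\<lambda>x. g x - f x)" unfolding norm1_def by auto
  show "\<And>x. x \<in> {-1..0} \<Longrightarrow> \<bar>dQ {-1..0} g x - dQ {-1..0} f x\<bar> \<le> norm1 (\<lambda>x. g x - f x)"
    using L(2) nl by force
  show "\<And>x. x \<in> {0..1} \<Longrightarrow> \<bar>dQ {0..1} g x - dQ {0..1} f x\<bar> \<le> norm1 (\<lambda>x. g x - f x)"
    using R(2) nr by force
  fix x :: real assume x: "x \<in> {-1..1}"
  show "\<bar>g x - f x\<bar> \<le> norm1 (\<lambda>x. g x - f x)"
  proof (cases "x \<le> 0")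
    case True then show ?thesis using L(1)[of x] nl x by force
  next
    case False then show ?thesis using R(1)[of x] nr x by force
  qed
qed

lemma funpow_in_I:
  fixes g :: "real \<Rightarrow> real"
  assumes "\<forall>x\<in>{-1..1::real}. g x \<in> {-1..1}"
  shows "(g^^n) 0 \<in> {-1..1}"
proof (induction n)
  case 0 show ?case by (simp add: funpow_0)
next
  case (Suc n)
  then have "g ((g^^n) 0) \<in> {-1..1}" using assms by blast
  then show ?case by simp
qed

lemma orbit_close:
  fixes f :: "real \<Rightarrow> real"
  assumes "continuous_on {-1..1} f" "\<forall>x\<in>{-1..1}. f x \<in> {-1..1}"
  shows "\<eta> > 0 \<Longrightarrow> \<exists>\<delta>>0. \<forall>g. (\<forall>x\<in>{-1..1}. g x \<in> {-1..1} \<and> \<bar>g x - f x\<bar> < \<delta>) \<longrightarrow>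
            (\<forall>k\<le>n. \<bar>(g^^k) 0 - (f^^k) 0\<bar> < \<eta>)"
proof (induction n arbitrary: \<eta>)
  case 0
  then show ?case by (intro exI[of _ 1]) auto
next
  case (Suc n)
  have "uniformly_continuous_on {-1..1} f"
    using compact_uniformly_continuous[OF assms(1)] by simp
  then obtain \<rho> where \<rho>: "\<rho> > 0" "\<forall>x\<in>{-1..1}. \<forall>x'\<in>{-1..1}. dist x' x < \<rho> \<longrightarrow> dist (f x') (f x) < \<eta>/2"
    unfolding uniformly_continuous_on_def using Suc.prems by (meson half_gt_zero)
  obtain \<delta>1 where \<delta>1: "\<delta>1 > 0" "\<forall>g. (\<forall>x\<in>{-1..1}. g x \<in> {-1..1} \<and> \<bar>g x - f x\<bar> < \<delta>1) \<longrightarrow>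
            (\<forall>k\<le>n. \<bar>(g^^k) 0 - (f^^k) 0\<bar> < min \<eta> \<rho>)"
    using Suc.IH[of "min \<eta> \<rho>"] Suc.prems \<rho>(1) by auto
  show ?case
  proof (intro exI[of _ "min \<delta>1 (\<eta>/2)"] conjI allI impI)
    show "min \<delta>1 (\<eta>/2) > 0" using \<delta>1 Suc.prems by auto
    fix g k assume g: "\<forall>x\<in>{-1..1}. g x \<in> {-1..1} \<and> \<bar>g x - f x\<bar> < min \<delta>1 (\<eta>/2)" and k: "k \<le> Suc n"
    have IH: "\<forall>k\<le>n. \<bar>(g^^k) 0 - (f^^k) 0\<bar> < min \<eta> \<rho>" using \<delta>1(2) g by auto
    show "\<bar>(g^^k) 0 - (f^^k) 0\<bar> < \<eta>"
    proof (cases "k \<le> n")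
      case True then show ?thesis using IH by fastforce
    next
      case False
      then have k: "k = Suc n" using k by auto
      define a where "a = (g^^n) 0"
      define b where "b = (f^^n) 0"
      have aI: "a \<in> {-1..1}" unfolding a_def using funpow_in_I g by blast
      have bI: "b \<in> {-1..1}" unfolding b_def using funpow_in_I assms(2) by blast
      have "\<bar>a - b\<bar> < \<rho>" using IH unfolding a_def b_def by fastforce
      then have "\<bar>f a - f b\<bar> < \<eta>/2" using \<rho>(2) aI bI by (auto simp: dist_real_def)
      moreover have "\<bar>g a - f a\<bar> < \<eta>/2" using g aI by auto
      moreover have "(g^^k) 0 = g a" "(f^^k) 0 = f b" unfolding k a_def b_def by auto
      ultimately show ?thesis by linarith
    qed
  qed
qed

lemma img_interval_eq:
  fixes h :: "real \<Rightarrow> real"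
  assumes "p \<le> q" "continuous_on {p..q} h" "m \<in> h ` {p..q}" "M \<in> h ` {p..q}"
    "\<forall>x\<in>{p..q}. m \<le> h x \<and> h x \<le> M"
  shows "h ` {p..q} = {m..M}"
proof -
  obtain c d where cd: "h ` {p..q} = {c..d}" "c \<le> d"
    using continuous_image_closed_interval[OF assms(1,2)] by blast
  have "c \<in> h ` {p..q}" "d \<in> h ` {p..q}" using cd by auto
  then have "m \<le> c" "d \<le> M" using assms(5) by auto
  moreover have "c \<le> m" "M \<le> d" using assms(3,4) cd(1) by auto
  ultimately show ?thesis using cd(1) by simp
qed

lemma J_sub:
  assumes "expd l g" "l \<ge> 0" "{a..b} \<subseteq> {-1..1::real}"
  shows "(g^^n) ` {a..b} \<subseteq> {-1..1}"
  using assms expd_funpow_maps[OF assms(1,2)] by blast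

lemma onesided_of:
  fixes p q z \<epsilon> :: real
  assumes "p \<le> q" "{p..q} \<subseteq> {-1..1}" "q - p \<le> \<epsilon>" "z \<in> {p..q}"
    "(z = 0 \<and> (z = p \<or> z = q)) \<or> \<epsilon> < \<bar>z\<bar>"
  shows "{p..q} \<subseteq> {-1..0} \<or> {p..q} \<subseteq> {0..1}"
proof -
  have b: "-1 \<le> p" "q \<le> 1" using assms(1,2) by auto
  have "0 \<le> p \<or> q \<le> 0"
  proof (cases "z \<ge> 0")
    case True then show ?thesis using assms(3-5) by auto
  next
    case False then show ?thesis using assms(3-5) by auto
  qed
  then show ?thesis using b by auto
qed

lemma block_N:
  assumes g: "expd l g" "l \<ge> 0" and N: "N \<ge> 1"
    and ab: "{a..b} \<subseteq> {-1..1::real}" "a \<le> b"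
    and ui: "(g^^i)`{a..b} = {u..v}" "u \<le> 0" "0 \<le> v"
    and os: "\<forall>k. 1 \<le> k \<longrightarrow> k < N \<longrightarrow> (g^^(i+k))`{a..b} \<subseteq> {-1..0} \<or> (g^^(i+k))`{a..b} \<subseteq> {0..1}"
  shows "diameter ((g^^(i+N))`{a..b}) \<ge> l^(N-1) * (l/2 * (v-u))"
proof -
  define J where "J n = (g^^n)`{a..b}" for n
  have uvI: "{u..v} \<subseteq> {-1..1}" using J_sub[OF g ab(1), of i] ui(1) by simp
  have "J (Suc i) = g ` {u..v}" unfolding J_def using ui(1) by (simp only: funpow_img_Suc)
  then have J1: "diameter (J (i+1)) \<ge> l/2*(v-u)" using step_fold[OF g(1) ui(2,3) uvI] by simp
  have step: "1 \<le> k \<Longrightarrow> k \<le> N \<Longrightarrow> diameter (J (i+k)) \<ge> l^(k-1) * diameter (J (i+1))" for k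
  proof (induction k)
    case 0 then show ?case by simp
  next
    case (Suc k)
    show ?case
    proof (cases "k = 0")
      case True then show ?thesis by simp
    next
      case False
      then have k: "1 \<le> k" "k < N" using Suc.prems by auto
      have IH: "diameter (J (i+k)) \<ge> l^(k-1) * diameter (J (i+1))" using Suc.IH k by simp
      obtain p q where pq: "J (i+k) = {p..q}" "p \<le> q"
        using expd_J_interval[OF g ab, of "i+k"] unfolding J_def by blast
      have "{p..q} \<subseteq> {-1..0} \<or> {p..q} \<subseteq> {0..1}" using os k pq(1) unfolding J_def by auto
      then have "diameter (g ` {p..q}) \<ge> l * (q - p)" using step_one[OF g(1) pq(2)] by blast
      moreover have "J (i + Suc k) = g ` {p..q}" using pq(1) unfolding J_def
        by (simp only: add_Suc_right funpow_img_Suc)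
      moreover have "diameter (J (i+k)) = q - p" using pq by simp
      ultimately have A: "diameter (J (i + Suc k)) \<ge> l * diameter (J (i+k))" by simp
      have B: "l * diameter (J (i+k)) \<ge> l * (l^(k-1) * diameter (J (i+1)))"
        using IH g(2) by (rule mult_left_mono)
      have C: "l * (l^(k-1) * diameter (J (i+1))) = l^(Suc k - 1) * diameter (J (i+1))"
        using k(1) by (cases k) auto
      show ?thesis using A B C by linarith
    qed
  qed
  have "diameter (J (i+N)) \<ge> l^(N-1) * diameter (J (i+1))" using step[OF N order_refl] .
  moreover have "l^(N-1) * diameter (J (i+1)) \<ge> l^(N-1) * (l/2*(v-u))"
    using J1 g(2) by (intro mult_left_mono) auto
  ultimately show ?thesis unfolding J_def by linarith
qed

lemma exists_N:
  fixes l :: real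
  assumes "l > 1"
  shows "\<exists>N\<ge>1. 2 < l^N"
proof -
  obtain N where N: "2 < l^N" using real_arch_pow assms by blast
  then have "N \<noteq> 0" by (cases N) auto
  then show ?thesis using N by (intro exI[of _ N]) auto
qed

lemma part1:
  assumes f: "expd l f" "l > 1"
  shows "\<exists>\<epsilon>>0. expansive \<epsilon> f"
proof -
  have l0: "l \<ge> 0" using f by simp
  obtain N where N: "N \<ge> 1" "2 < l^N" using exists_N f(2) by blast
  define Z where "Z = (\<lambda>k. \<bar>(f^^k) 0\<bar>) ` {k. 1 \<le> k \<and> k < N \<and> (f^^k) 0 \<noteq> 0}"
  have finZ: "finite (insert 1 Z)" unfolding Z_def by auto
  define d where "d = Min (insert 1 Z)"
  have "\<forall>a\<in>insert 1 Z. 0 < a" unfolding Z_def by auto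
  then have dpos: "d > 0" unfolding d_def using finZ Min_gr_iff by blast
  have dle: "d \<le> \<bar>(f^^k) 0\<bar>" if "1 \<le> k" "k < N" "(f^^k) 0 \<noteq> 0" for k
  proof -
    have "\<bar>(f^^k) 0\<bar> \<in> insert 1 Z" unfolding Z_def using that by blast
    then show ?thesis unfolding d_def using Min_le[OF finZ] by blast
  qed
  define \<epsilon> where "\<epsilon> = d/2"
  have \<epsilon>: "\<epsilon> > 0" "\<epsilon> < d" using dpos unfolding \<epsilon>_def by auto
  define \<theta> where "\<theta> = min l (l^N/2)"
  have \<theta>: "\<theta> > 1" "\<theta> \<le> l" "\<theta> \<le> l^N/2" using f N unfolding \<theta>_def by auto
  have "expansive \<epsilon> f"
  proof (rule expansive_crit[OF f(1) l0 \<epsilon>(1) \<theta>(1)])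
    fix a b :: real
    assume ab: "a < b" "{a..b} \<subseteq> {-1..1}" and bnd: "\<forall>n. diameter ((f^^n)`{a..b}) \<le> \<epsilon>"
    define J where "J n = (f^^n)`{a..b}" for n
    have Jint: "\<exists>p q. J n = {p..q} \<and> p \<le> q \<and> {p..q} \<subseteq> {-1..1}" for n
      using expd_J_interval[OF f(1) l0 ab(2)] ab(1) unfolding J_def by auto
    show "\<forall>i. \<exists>j>i. diameter ((f^^j)`{a..b}) \<ge> \<theta> * diameter ((f^^i)`{a..b})"
    proof
      fix i
      obtain u v where uv: "J i = {u..v}" "u \<le> v" "{u..v} \<subseteq> {-1..1}" using Jint by blast
      have dJi: "diameter (J i) = v - u" using uv by simp
      show "\<exists>j>i. diameter ((f^^j)`{a..b}) \<ge> \<theta> * diameter ((f^^i)`{a..b})"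
      proof (cases "{u..v} \<subseteq> {-1..0} \<or> {u..v} \<subseteq> {0..1}")
        case True
        have "diameter (J (Suc i)) = diameter (f ` {u..v})" unfolding J_def using uv(1) unfolding J_def
          by (simp only: funpow_img_Suc)
        also have "\<dots> \<ge> l * (v - u)" using step_one[OF f(1) uv(2) True] .
        finally have X: "diameter (J (Suc i)) \<ge> l * (v - u)" .
        have "\<theta> * (v-u) \<le> l*(v-u)" using \<theta>(2) uv(2) by (intro mult_right_mono) auto
        moreover have "\<theta> * diameter (J i) = \<theta>*(v-u)" using dJi by simp
        ultimately have "diameter (J (Suc i)) \<ge> \<theta> * diameter (J i)" using X by linarith
        then show ?thesis unfolding J_def by (intro exI[of _ "Suc i"]) auto
      next
        case False
        then have uv0: "u < 0" "0 < v" using uv(3) by auto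
        have C: "\<forall>k. 1 \<le> k \<longrightarrow> k < N \<longrightarrow> (\<exists>p q. J (i+k) = {p..q} \<and> p \<le> q \<and>
                  ((f^^k) 0 = p \<or> (f^^k) 0 = q) \<and> ({p..q} \<subseteq> {-1..0} \<or> {p..q} \<subseteq> {0..1}))"
        proof (intro allI)
          fix k show "1 \<le> k \<longrightarrow> k < N \<longrightarrow> (\<exists>p q. J (i+k) = {p..q} \<and> p \<le> q \<and>
                  ((f^^k) 0 = p \<or> (f^^k) 0 = q) \<and> ({p..q} \<subseteq> {-1..0} \<or> {p..q} \<subseteq> {0..1}))"
          proof (induction k)
            case 0 then show ?case by simp
          next
            case (Suc k)
            show ?case
            proof (intro impI)
              assume k: "1 \<le> Suc k" "Suc k < N"
              have E: "\<exists>p q. J (i + Suc k) = {p..q} \<and> p \<le> q \<and> ((f^^Suc k) 0 = p \<or> (f^^Suc k) 0 = q)"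
              proof (cases "k = 0")
                case True
                have JS: "J (i + Suc k) = f ` {u..v}" using uv(1) True unfolding J_def
                  by (simp only: add_Suc_right add_0_right funpow_img_Suc)
                obtain c e where ce: "J (i + Suc k) = {c..e}" "c \<le> e" using Jint by blast
                have cf: "continuous_on {u..v} f" using expdD(1)[OF f(1)] uv(3) continuous_on_subset by blast
                have "f 0 \<in> f ` {u..v}" using uv0 by auto
                then have "f 0 \<in> {c..e}" using JS ce by simp
                moreover have "e \<in> f ` {u..v}" using JS ce by auto
                then have "e \<le> f 0" using expd_maps(2)[OF f(1) l0] uv(3) by auto
                ultimately have "e = f 0" by auto
                then show ?thesis using ce True by auto
              next
                case False
                then obtain p q where pq: "J (i+k) = {p..q}" "p \<le> q" "(f^^k) 0 = p \<or> (f^^k) 0 = q"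
                  "{p..q} \<subseteq> {-1..0} \<or> {p..q} \<subseteq> {0..1}" using Suc.IH k by auto
                have JS: "J (i + Suc k) = f ` {p..q}" using pq(1) unfolding J_def
                  by (simp only: add_Suc_right funpow_img_Suc)
                have pqI: "{p..q} \<subseteq> {-1..1}" using pq(4) by auto
                have cf: "continuous_on {p..q} f" using expdD(1)[OF f(1)] pqI continuous_on_subset by blast
                have fz: "(f^^Suc k) 0 = f ((f^^k) 0)" by simp
                have pin: "p \<in> {p..q}" "q \<in> {p..q}" using pq(2) by auto
                from pq(4) show ?thesis
                proof
                  assume A: "{p..q} \<subseteq> {-1..0}"
                  then have pb: "-1 \<le> p" "q \<le> 0" using pin by auto
                  have mono: "\<forall>x\<in>{p..q}. f p \<le> f x \<and> f x \<le> f q"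
                  proof
                    fix x assume x: "x \<in> {p..q}"
                    then have x1: "p \<le> x" "x \<le> q" by auto
                    have "f x - f p \<ge> l*(x-p)" using expdD(5)[OF f(1) pb(1) x1(1)] x1 pb by linarith
                    moreover have "f q - f x \<ge> l*(q-x)" using expdD(5)[OF f(1) _ x1(2) pb(2)] x1 pb by linarith
                    moreover have "l*(x-p) \<ge> 0" "l*(q-x) \<ge> 0" using l0 x1 by auto
                    ultimately show "f p \<le> f x \<and> f x \<le> f q" by linarith
                  qed
                  have "f ` {p..q} = {f p..f q}"
                    by (rule img_interval_eq[OF pq(2) cf]) (use pin mono in auto)
                  moreover have "f p \<le> f q" using mono pin by blast
                  moreover have "(f^^Suc k) 0 = f p \<or> (f^^Suc k) 0 = f q" using fz pq(3) by auto
                  ultimately show ?thesis using JS by blast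
                next
                  assume A: "{p..q} \<subseteq> {0..1}"
                  then have pb: "0 \<le> p" "q \<le> 1" using pin by auto
                  have mono: "\<forall>x\<in>{p..q}. f q \<le> f x \<and> f x \<le> f p"
                  proof
                    fix x assume x: "x \<in> {p..q}"
                    then have x1: "p \<le> x" "x \<le> q" by auto
                    have "f p - f x \<ge> l*(x-p)" using expdD(6)[OF f(1) pb(1) x1(1)] x1 pb by linarith
                    moreover have "f x - f q \<ge> l*(q-x)" using expdD(6)[OF f(1) _ x1(2) pb(2)] x1 pb by linarith
                    moreover have "l*(x-p) \<ge> 0" "l*(q-x) \<ge> 0" using l0 x1 by auto
                    ultimately show "f q \<le> f x \<and> f x \<le> f p" by linarith
                  qed
                  have "f ` {p..q} = {f q..f p}"
                    by (rule img_interval_eq[OF pq(2) cf]) (use pin mono in auto)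
                  moreover have "f q \<le> f p" using mono pin by blast
                  moreover have "(f^^Suc k) 0 = f q \<or> (f^^Suc k) 0 = f p" using fz pq(3) by auto
                  ultimately show ?thesis using JS by blast
                qed
              qed
              then obtain p q where pq: "J (i + Suc k) = {p..q}" "p \<le> q" "(f^^Suc k) 0 = p \<or> (f^^Suc k) 0 = q"
                by blast
              have "J (i+Suc k) \<subseteq> {-1..1}" unfolding J_def by (rule J_sub[OF f(1) l0 ab(2)])
              then have pqI: "{p..q} \<subseteq> {-1..1}" using pq(1) by simp
              have "diameter (J (i + Suc k)) \<le> \<epsilon>" using bnd unfolding J_def by blast
              then have "q - p \<le> \<epsilon>" using pq(1,2) by simp
              moreover have "(f^^Suc k) 0 \<in> {p..q}" using pq(2,3) by auto
              moreover have "((f^^Suc k) 0 = 0 \<and> ((f^^Suc k) 0 = p \<or> (f^^Suc k) 0 = q)) \<or> \<epsilon> < \<bar>(f^^Suc k) 0\<bar>"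
              proof (cases "(f^^Suc k) 0 = 0")
                case True then show ?thesis using pq(3) by blast
              next
                case False then have "d \<le> \<bar>(f^^Suc k) 0\<bar>" using dle[of "Suc k"] k by blast
                then show ?thesis using \<epsilon>(2) by linarith
              qed
              ultimately have "{p..q} \<subseteq> {-1..0} \<or> {p..q} \<subseteq> {0..1}"
                using onesided_of[OF pq(2) pqI] by blast
              then show "\<exists>p q. J (i + Suc k) = {p..q} \<and> p \<le> q \<and>
                  ((f^^Suc k) 0 = p \<or> (f^^Suc k) 0 = q) \<and> ({p..q} \<subseteq> {-1..0} \<or> {p..q} \<subseteq> {0..1})"
                using pq by blast
            qed
          qed
        qed
        have os: "\<forall>k. 1 \<le> k \<longrightarrow> k < N \<longrightarrow> (f^^(i+k))`{a..b} \<subseteq> {-1..0} \<or> (f^^(i+k))`{a..b} \<subseteq> {0..1}"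
        proof (intro allI impI)
          fix k assume "1 \<le> k" "k < N"
          then obtain p q where pq: "J (i+k) = {p..q}" "{p..q} \<subseteq> {-1..0} \<or> {p..q} \<subseteq> {0..1}"
            using C by blast
          have "(f^^(i+k))`{a..b} = {p..q}" using pq(1) unfolding J_def .
          then show "(f^^(i+k))`{a..b} \<subseteq> {-1..0} \<or> (f^^(i+k))`{a..b} \<subseteq> {0..1}" using pq(2) by simp
        qed
        have "diameter ((f^^(i+N))`{a..b}) \<ge> l^(N-1) * (l/2 * (v-u))"
          using block_N[OF f(1) l0 N(1) ab(2) less_imp_le[OF ab(1)] _ _ _ os] uv(1) uv0 unfolding J_def by auto
        moreover have "l^(N-1) * (l/2 * (v-u)) = l^N/2 * (v - u)"
          using N(1) by (cases N) auto
        moreover have "l^N/2 * (v - u) \<ge> \<theta> * (v - u)" using \<theta>(3) uv(2) by (intro mult_right_mono) auto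
        moreover have "\<theta> * diameter ((f^^i)`{a..b}) = \<theta>*(v-u)" using dJi unfolding J_def by simp
        ultimately have "diameter ((f^^(i+N))`{a..b}) \<ge> \<theta> * diameter ((f^^i)`{a..b})"
          by linarith
        then show ?thesis using N(1) by (intro exI[of _ "i+N"]) auto
      qed
    qed
  qed
  then show ?thesis using \<epsilon> by blast
qed

lemma expd_mono:
  assumes "expd l g" "0 \<le> l'" "l' \<le> l"
  shows "expd l' g"
  unfolding expd_def
proof (intro conjI allI impI)
  show "continuous_on {-1..1} g" "g (-1) = -1" "g 1 = -1" "g 0 \<le> 1" using expdD[OF assms(1)] by auto
  fix x y :: real
  {
    assume xy: "-1 \<le> x" "x \<le> y" "y \<le> 0"
    have "l'*(y-x) \<le> l*(y-x)" using assms(3) xy by (intro mult_right_mono) auto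
    then show "g y - g x \<ge> l'*(y-x)" using expdD(5)[OF assms(1) xy] by linarith
  }
  {
    assume xy: "0 \<le> x" "x \<le> y" "y \<le> 1"
    have "l'*(y-x) \<le> l*(y-x)" using assms(3) xy by (intro mult_right_mono) auto
    then show "g x - g y \<ge> l'*(y-x)" using expdD(6)[OF assms(1) xy] by linarith
  }
qed

lemma perturb:
  assumes f: "pw_exp_unimodal f" and g: "pw_exp_unimodal g"
    and L: "\<forall>x\<in>{-1..0}. dQ {-1..0} f x \<ge> \<Lambda>" "\<forall>x\<in>{0..1}. dQ {0..1} f x \<le> -\<Lambda>"
    and n: "norm1 (\<lambda>x. g x - f x) < \<delta>"
  shows "expd (\<Lambda> - \<delta>) g"
proof -
  note G = peu_basic[OF g] and CL = close_peu[OF f g]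
  show ?thesis
  proof (rule expd_from[of g "dQ {-1..0} g" _ "dQ {0..1} g"])
    show "continuous_on {-1..1} g" "g (-1) = -1" "g 1 = -1" "g 0 \<le> 1" using G by auto
    fix z :: real
    {
      assume z: "-1 < z" "z < 0"
      have "\<bar>dQ {-1..0} g z - dQ {-1..0} f z\<bar> \<le> norm1 (\<lambda>x. g x - f x)" using CL(2) z by auto
      moreover have "dQ {-1..0} f z \<ge> \<Lambda>" using L(1) z by auto
      ultimately have "dQ {-1..0} g z \<ge> \<Lambda> - \<delta>" using n by linarith
      then show "(g has_real_derivative dQ {-1..0} g z) (at z) \<and> dQ {-1..0} g z \<ge> \<Lambda> - \<delta>"
        using G(9)[OF z] by blast
    }
    {
      assume z: "0 < z" "z < 1"
      have "\<bar>dQ {0..1} g z - dQ {0..1} f z\<bar> \<le> norm1 (\<lambda>x. g x - f x)" using CL(3) z by auto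
      moreover have "dQ {0..1} f z \<le> -\<Lambda>" using L(2) z by auto
      ultimately have "dQ {0..1} g z \<le> -(\<Lambda> - \<delta>)" using n by linarith
      then show "(g has_real_derivative dQ {0..1} g z) (at z) \<and> dQ {0..1} g z \<le> -(\<Lambda> - \<delta>)"
        using G(10)[OF z] by blast
    }
  qed
qed

lemma slope_right_peu:
  assumes g: "pw_exp_unimodal g" and AB: "0 \<le> A" "B \<le> 1"
    and D: "\<forall>y\<in>{A..B}. dQ {0..1} g y \<le> C" and xy: "A \<le> x" "x \<le> y" "y \<le> B"
  shows "g x - g y \<ge> (-C)*(y-x)"
proof (rule slope_upper[of x y g "dQ {0..1} g" C])
  show "x \<le> y" by fact
  have "{x..y} \<subseteq> {-1..1}" using AB xy by auto
  then show "continuous_on {x..y} g" using peu_basic(1)[OF g] continuous_on_subset by blast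
  fix z assume z: "x < z" "z < y"
  then have "0 < z" "z < 1" using AB xy by auto
  then show "(g has_real_derivative dQ {0..1} g z) (at z) \<and> dQ {0..1} g z \<le> C"
    using peu_basic(10)[OF g] D z xy by auto
qed

lemma slope_left_peu:
  assumes g: "pw_exp_unimodal g" and AB: "-1 \<le> A" "B \<le> 0"
    and D: "\<forall>y\<in>{A..B}. dQ {-1..0} g y \<ge> C" and xy: "A \<le> x" "x \<le> y" "y \<le> B"
  shows "g y - g x \<ge> C*(y-x)"
proof (rule slope_lower[of x y g "dQ {-1..0} g" C])
  show "x \<le> y" by fact
  have "{x..y} \<subseteq> {-1..1}" using AB xy by auto
  then show "continuous_on {x..y} g" using peu_basic(1)[OF g] continuous_on_subset by blast
  fix z assume z: "x < z" "z < y"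
  then have "-1 < z" "z < 0" using AB xy by auto
  then show "(g has_real_derivative dQ {-1..0} g z) (at z) \<and> dQ {-1..0} g z \<ge> C"
    using peu_basic(9)[OF g] D z xy by auto
qed

lemma finite_radius:
  assumes "finite A" "\<forall>k\<in>A. \<exists>r>0. Q k r"
    "\<And>k r r'. 0 < r' \<Longrightarrow> r' \<le> r \<Longrightarrow> Q k r \<Longrightarrow> Q k r'"
  shows "\<exists>r>0. \<forall>k\<in>A. Q k (r::real)"
  using assms(1,2)
proof (induction A rule: finite_induct)
  case empty then show ?case by (intro exI[of _ 1]) auto
next
  case (insert x F)
  obtain r1 where r1: "r1 > 0" "\<forall>k\<in>F. Q k r1" using insert by auto
  obtain r2 where r2: "r2 > 0" "Q x r2" using insert by auto
  have "Q x (min r1 r2)" using assms(3)[of "min r1 r2" r2 x] r1 r2 by auto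
  moreover have "\<forall>k\<in>F. Q k (min r1 r2)"
  proof
    fix k assume "k \<in> F" then show "Q k (min r1 r2)" using assms(3)[of "min r1 r2" r1 k] r1 r2 by auto
  qed
  ultimately have "\<forall>k\<in>insert x F. Q k (min r1 r2)" by blast
  then show ?case using r1 r2 by (intro exI[of _ "min r1 r2"]) auto
qed

lemma chain_funpow:
  fixes f :: "real \<Rightarrow> real"
  assumes "\<And>k. k < n \<Longrightarrow> (f has_real_derivative D k) (at ((f^^k) x))"
  shows "((f^^n) has_real_derivative (\<Prod>k<n. D k)) (at x)"
  using assms
proof (induction n)
  case 0
  then show ?case by (simp add: id_def DERIV_ident)
next
  case (Suc n)
  have IH: "((f^^n) has_real_derivative (\<Prod>k<n. D k)) (at x)" using Suc by auto
  have "(f \<circ> (f^^n) has_real_derivative D n * (\<Prod>k<n. D k)) (at x)"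
    using DERIV_chain[OF Suc.prems[of n] IH] by simp
  then show ?case by (simp add: o_def mult.commute)
qed

lemma block_prod:
  assumes g: "expd l g" "l \<ge> 0" "{a..b} \<subseteq> {-1..1::real}"
    and st: "\<forall>j<n. \<exists>P Q. (g^^(s+j))`{a..b} = {P..Q} \<and> P \<le> Q \<and> \<bar>g Q - g P\<bar> \<ge> c j * (Q-P)"
    and c: "\<forall>j<n. c j \<ge> 0"
  shows "diameter ((g^^(s+n))`{a..b}) \<ge> (\<Prod>j<n. c j) * diameter ((g^^s)`{a..b})"
  using st c
proof (induction n)
  case 0 then show ?case by simp
next
  case (Suc n)
  have IH: "diameter ((g^^(s+n))`{a..b}) \<ge> (\<Prod>j<n. c j) * diameter ((g^^s)`{a..b})"
    using Suc by auto
  obtain P Q where PQ: "(g^^(s+n))`{a..b} = {P..Q}" "P \<le> Q" "\<bar>g Q - g P\<bar> \<ge> c n * (Q-P)"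
    using Suc.prems by blast
  have PQI: "{P..Q} \<subseteq> {-1..1}" using J_sub[OF g, of "s+n"] PQ(1) by simp
  have "(g^^(s + Suc n))`{a..b} = g ` {P..Q}" using PQ(1) by (simp only: add_Suc_right funpow_img_Suc)
  moreover have "\<bar>g Q - g P\<bar> \<le> diameter (g ` {P..Q})" using diam_img_ge[OF g(1) PQI] PQ(2) by auto
  moreover have "diameter ((g^^(s+n))`{a..b}) = Q - P" using PQ by simp
  ultimately have A: "diameter ((g^^(s + Suc n))`{a..b}) \<ge> c n * diameter ((g^^(s+n))`{a..b})"
    using PQ(3) by simp
  have B: "c n * diameter ((g^^(s+n))`{a..b}) \<ge> c n * ((\<Prod>j<n. c j) * diameter ((g^^s)`{a..b}))"
    using IH Suc.prems(2) by (intro mult_left_mono) auto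
  have "(\<Prod>j<Suc n. c j) = (\<Prod>j<n. c j) * c n" by simp
  then show ?case using A B by (simp add: mult_ac)
qed

lemma f_setup:
  assumes f: "pw_exp_unimodal f"
  obtains \<Lambda> where "\<Lambda> > 1" "\<forall>x\<in>{-1..0}. dQ {-1..0} f x \<ge> \<Lambda>" "\<forall>x\<in>{0..1}. dQ {0..1} f x \<le> -\<Lambda>"
    "expd \<Lambda> f" "\<forall>x\<in>{-1..1}. f x \<in> {-1..1}"
proof -
  obtain \<Lambda> where L: "\<Lambda> > 1" "\<forall>x\<in>{-1..0}. dQ {-1..0} f x \<ge> \<Lambda>" "\<forall>x\<in>{0..1}. dQ {0..1} f x \<le> -\<Lambda>"
    using peu_Lambda[OF f] by blast
  have E: "expd \<Lambda> f"
    apply (rule expd_from[of f "dQ {-1..0} f" _ "dQ {0..1} f"])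
    using peu_basic[OF f] L by auto
  have "\<forall>x\<in>{-1..1}. f x \<in> {-1..1}" using expd_maps(1)[OF E] L(1) by auto
  then show ?thesis using that L E by blast
qed

lemma g_setup:
  assumes f: "pw_exp_unimodal f" and g: "pw_exp_unimodal g"
    and L: "\<Lambda> > 1" "\<forall>x\<in>{-1..0}. dQ {-1..0} f x \<ge> \<Lambda>" "\<forall>x\<in>{0..1}. dQ {0..1} f x \<le> -\<Lambda>"
    and n: "norm1 (\<lambda>x. g x - f x) < \<delta>" "\<delta> \<le> (\<Lambda> - 1)/2"
  shows "expd ((\<Lambda>+1)/2) g" "\<forall>x\<in>{-1..1}. g x \<in> {-1..1} \<and> \<bar>g x - f x\<bar> < \<delta>"
proof -
  have "expd (\<Lambda> - \<delta>) g" using perturb[OF f g L(2,3) n(1)] .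
  then show E: "expd ((\<Lambda>+1)/2) g" by (rule expd_mono) (use n(2) L(1) in auto)
  show "\<forall>x\<in>{-1..1}. g x \<in> {-1..1} \<and> \<bar>g x - f x\<bar> < \<delta>"
  proof
    fix x :: real assume x: "x \<in> {-1..1}"
    have "g x \<in> {-1..1}" using expd_maps(1)[OF E _ x] L(1) by auto
    moreover have "\<bar>g x - f x\<bar> < \<delta>" using close_peu(1)[OF f g x] n(1) by linarith
    ultimately show "g x \<in> {-1..1} \<and> \<bar>g x - f x\<bar> < \<delta>" by blast
  qed
qed

lemma orbit_in_J:
  fixes g :: "real \<Rightarrow> real"
  assumes "(g^^i) ` {a..b} = {u..v}" "0 \<in> {u..v}"
  shows "(g^^k) 0 \<in> (g^^(i+k)) ` {a..b}"
proof -
  have "0 \<in> (g^^i) ` {a..b}" using assms by simp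
  then obtain x where x: "x \<in> {a..b}" "0 = (g^^i) x" by blast
  have "(g^^(i+k)) x = (g^^k) ((g^^i) x)" by (rule funpow_add_apply)
  then have "(g^^k) 0 = (g^^(i+k)) x" using x(2) by simp
  then show ?thesis using x(1) by blast
qed

lemma part2_np:
  assumes f: "pw_exp_unimodal f" and np: "\<not> periodic_pt f 0"
  shows "\<exists>\<epsilon>>0. stably_expansive \<epsilon> f"
proof -
  obtain \<Lambda> where L: "\<Lambda> > 1" "\<forall>x\<in>{-1..0}. dQ {-1..0} f x \<ge> \<Lambda>" "\<forall>x\<in>{0..1}. dQ {0..1} f x \<le> -\<Lambda>"
    "expd \<Lambda> f" "\<forall>x\<in>{-1..1}. f x \<in> {-1..1}"
    using f_setup[OF f] by blast
  define l where "l = (\<Lambda>+1)/2"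
  have l: "l > 1" "l \<ge> 0" using L(1) unfolding l_def by auto
  obtain N where N: "N \<ge> 1" "2 < l^N" using exists_N l(1) by blast
  have nz: "(f^^k) 0 \<noteq> 0" if "k \<ge> 1" for k using np that unfolding periodic_pt_def by blast
  define Z where "Z = (\<lambda>k. \<bar>(f^^k) 0\<bar>) ` {1..<N}"
  have finZ: "finite (insert 1 Z)" unfolding Z_def by auto
  define d where "d = Min (insert 1 Z)"
  have "\<forall>a\<in>insert 1 Z. 0 < a" unfolding Z_def using nz by auto
  then have dpos: "d > 0" unfolding d_def using finZ Min_gr_iff by blast
  have dle: "d \<le> \<bar>(f^^k) 0\<bar>" if "1 \<le> k" "k < N" for k
  proof -
    have "\<bar>(f^^k) 0\<bar> \<in> insert 1 Z" unfolding Z_def using that by auto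
    then show ?thesis unfolding d_def using Min_le[OF finZ] by blast
  qed
  obtain \<delta>1 where \<delta>1: "\<delta>1 > 0" "\<forall>g. (\<forall>x\<in>{-1..1}. g x \<in> {-1..1} \<and> \<bar>g x - f x\<bar> < \<delta>1) \<longrightarrow>
            (\<forall>k\<le>N. \<bar>(g^^k) 0 - (f^^k) 0\<bar> < d/2)"
  proof -
    have "d/2 > 0" using dpos by simp
    from orbit_close[OF peu_basic(1)[OF f] L(5) this, of N] show ?thesis using that by blast
  qed
  define \<delta> where "\<delta> = min \<delta>1 ((\<Lambda>-1)/2)"
  have \<delta>0: "\<delta> > 0" unfolding \<delta>_def using \<delta>1(1) L(1) by simp
  have \<delta>1': "\<delta> \<le> \<delta>1" unfolding \<delta>_def by (rule min.cobounded1)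
  have \<delta>2': "\<delta> \<le> (\<Lambda>-1)/2" unfolding \<delta>_def by (rule min.cobounded2)
  note \<delta> = \<delta>0 \<delta>1' \<delta>2'
  define \<epsilon> where "\<epsilon> = d/4"
  have \<epsilon>: "\<epsilon> > 0" "\<epsilon> < d/2" using dpos unfolding \<epsilon>_def by auto
  define \<theta> where "\<theta> = min l (l^N/2)"
  have \<theta>: "\<theta> > 1" "\<theta> \<le> l" "\<theta> \<le> l^N/2" using l N unfolding \<theta>_def by auto
  have "stably_expansive \<epsilon> f"
    unfolding stably_expansive_def
  proof (intro exI[of _ \<delta>] conjI allI impI)
    show "\<delta> > 0" by fact
    fix g assume gh: "pw_exp_unimodal g \<and> norm1 (\<lambda>x. g x - f x) < \<delta>"
    have gexp: "expd l g" and gcl: "\<forall>x\<in>{-1..1}. g x \<in> {-1..1} \<and> \<bar>g x - f x\<bar> < \<delta>"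
      using g_setup[OF f _ L(1,2,3) _ \<delta>(3)] gh unfolding l_def by auto
    have "\<forall>x\<in>{-1..1}. g x \<in> {-1..1} \<and> \<bar>g x - f x\<bar> < \<delta>1"
    proof
      fix x :: real assume "x \<in> {-1..1}"
      then have "g x \<in> {-1..1} \<and> \<bar>g x - f x\<bar> < \<delta>" using gcl by blast
      then show "g x \<in> {-1..1} \<and> \<bar>g x - f x\<bar> < \<delta>1" using \<delta>(2) by auto
    qed
    then have orb: "\<forall>k\<le>N. \<bar>(g^^k) 0 - (f^^k) 0\<bar> < d/2" using \<delta>1(2) by blast
    show "expansive \<epsilon> g"
    proof (rule expansive_crit[OF gexp l(2) \<epsilon>(1) \<theta>(1)])
      fix a b :: real
      assume ab: "a < b" "{a..b} \<subseteq> {-1..1}" and bnd: "\<forall>n. diameter ((g^^n)`{a..b}) \<le> \<epsilon>"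
      define J where "J n = (g^^n)`{a..b}" for n
      have Jint: "\<exists>p q. J n = {p..q} \<and> p \<le> q \<and> {p..q} \<subseteq> {-1..1}" for n
        using expd_J_interval[OF gexp l(2) ab(2)] ab(1) unfolding J_def by auto
      show "\<forall>i. \<exists>j>i. diameter ((g^^j)`{a..b}) \<ge> \<theta> * diameter ((g^^i)`{a..b})"
      proof
        fix i
        obtain u v where uv: "J i = {u..v}" "u \<le> v" "{u..v} \<subseteq> {-1..1}" using Jint by blast
        have dJi: "diameter (J i) = v - u" using uv by simp
        show "\<exists>j>i. diameter ((g^^j)`{a..b}) \<ge> \<theta> * diameter ((g^^i)`{a..b})"
        proof (cases "{u..v} \<subseteq> {-1..0} \<or> {u..v} \<subseteq> {0..1}")
          case True
          have "diameter (J (Suc i)) = diameter (g ` {u..v})" using uv(1) unfolding J_def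
            by (simp only: funpow_img_Suc)
          also have "\<dots> \<ge> l * (v - u)" using step_one[OF gexp uv(2) True] .
          finally have X: "diameter (J (Suc i)) \<ge> l * (v - u)" .
          have "\<theta> * (v-u) \<le> l*(v-u)" using \<theta>(2) uv(2) by (intro mult_right_mono) auto
          moreover have "\<theta> * diameter (J i) = \<theta>*(v-u)" using dJi by simp
          ultimately have "diameter (J (Suc i)) \<ge> \<theta> * diameter (J i)" using X by linarith
          then show ?thesis unfolding J_def by (intro exI[of _ "Suc i"]) auto
        next
          case False
          then have uv0: "u < 0" "0 < v" using uv(3) by auto
          have Ji: "(g^^i)`{a..b} = {u..v}" using uv(1) unfolding J_def .
          have zi: "0 \<in> {u..v}" using uv0 by simp
          have os: "\<forall>k. 1 \<le> k \<longrightarrow> k < N \<longrightarrow> (g^^(i+k))`{a..b} \<subseteq> {-1..0} \<or> (g^^(i+k))`{a..b} \<subseteq> {0..1}"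
          proof (intro allI impI)
            fix k assume k: "1 \<le> k" "k < N"
            obtain p q where pq: "J (i+k) = {p..q}" "p \<le> q" "{p..q} \<subseteq> {-1..1}" using Jint by blast
            have "(g^^k) 0 \<in> J (i+k)" unfolding J_def using orbit_in_J[OF Ji zi] .
            then have zin: "(g^^k) 0 \<in> {p..q}" using pq(1) by simp
            have "diameter (J (i+k)) \<le> \<epsilon>" using bnd unfolding J_def by blast
            then have len: "q - p \<le> \<epsilon>" using pq(1,2) by simp
            have "\<bar>(g^^k) 0 - (f^^k) 0\<bar> < d/2" using orb k(2) by simp
            moreover have "d \<le> \<bar>(f^^k) 0\<bar>" using dle k by blast
            ultimately have "\<epsilon> < \<bar>(g^^k) 0\<bar>" using \<epsilon>(2) by linarith
            then have "{p..q} \<subseteq> {-1..0} \<or> {p..q} \<subseteq> {0..1}"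
              using onesided_of[OF pq(2) pq(3) len zin] by blast
            then show "(g^^(i+k))`{a..b} \<subseteq> {-1..0} \<or> (g^^(i+k))`{a..b} \<subseteq> {0..1}"
              using pq(1) unfolding J_def by simp
          qed
          have "diameter ((g^^(i+N))`{a..b}) \<ge> l^(N-1) * (l/2 * (v-u))"
            using block_N[OF gexp l(2) N(1) ab(2) less_imp_le[OF ab(1)] Ji _ _ os] uv0 by simp
          moreover have "l^(N-1) * (l/2 * (v-u)) = l^N/2 * (v - u)"
            using N(1) by (cases N) auto
          moreover have "l^N/2 * (v - u) \<ge> \<theta> * (v - u)" using \<theta>(3) uv(2) by (intro mult_right_mono) auto
          moreover have "\<theta> * diameter ((g^^i)`{a..b}) = \<theta>*(v-u)" using dJi unfolding J_def by simp
          ultimately have "diameter ((g^^(i+N))`{a..b}) \<ge> \<theta> * diameter ((g^^i)`{a..b})"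
            by linarith
          then show ?thesis using N(1) by (intro exI[of _ "i+N"]) auto
        qed
      qed
    qed
  qed
  then show ?thesis using \<epsilon> by blast
qed

lemma funpow_m1:
  fixes f :: "real \<Rightarrow> real"
  assumes "f (-1) = -1"
  shows "(f^^m) (-1) = -1"
proof (induction m)
  case 0 show ?case by (simp add: funpow_0)
next
  case (Suc m) then show ?case using assms by simp
qed

lemma part2_per:
  assumes f: "pw_exp_unimodal f" and p: "p \<ge> 2" "prime_period f 0 p"
    and gd: "\<bar>deriv (f^^(p-1)) (f 0)\<bar> * min \<bar>dQ {0..1} f 0\<bar> \<bar>dQ {-1..0} f 0\<bar> > 2"
  shows "\<exists>\<epsilon>>0. stably_expansive \<epsilon> f"
proof -
  obtain \<Lambda> where L: "\<Lambda> > 1" "\<forall>x\<in>{-1..0}. dQ {-1..0} f x \<ge> \<Lambda>" "\<forall>x\<in>{0..1}. dQ {0..1} f x \<le> -\<Lambda>"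
    "expd \<Lambda> f" "\<forall>x\<in>{-1..1}. f x \<in> {-1..1}"
    using f_setup[OF f] by blast
  note F = peu_basic[OF f]
  define z where "z k = (f^^k) 0" for k
  define Df where "Df w = (if w < 0 then dQ {-1..0} f w else dQ {0..1} f w)" for w
  define a where "a k = \<bar>Df (z k)\<bar>" for k
  have pp: "(f^^p) 0 = 0" "\<And>k. 1 \<le> k \<Longrightarrow> k < p \<Longrightarrow> z k \<noteq> 0"
    using p(2) unfolding prime_period_def z_def by auto
  have zin: "-1 < z k \<and> z k < 1" if k: "1 \<le> k" "k < p" for k
  proof -
    have zI: "z k \<in> {-1..1}" unfolding z_def using funpow_in_I L(5) by blast
    have fz: "f (z k) \<noteq> -1"
    proof
      assume h: "f (z k) = -1"
      obtain m where m: "p = Suc (k + m)" using less_imp_Suc_add k(2) by blast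
      have "(f^^p) 0 = (f^^(k + Suc m)) 0" using m by simp
      also have "\<dots> = (f^^(Suc m)) ((f^^k) 0)" by (rule funpow_add_apply)
      also have "\<dots> = (f^^m) (f (z k))" unfolding z_def by (simp only: funpow_Suc_right o_apply)
      also have "\<dots> = -1" using h funpow_m1[of f m] F(2) by simp
      finally show False using pp(1) by simp
    qed
    have "z k \<noteq> 1" using fz F(3) by auto
    moreover have "z k \<noteq> -1" using fz F(2) by auto
    ultimately show ?thesis using zI by auto
  qed
  have Df_der: "(f has_real_derivative Df w) (at w)" if "-1 < w" "w < 1" "w \<noteq> 0" for w
  proof (cases "w < 0")
    case True then show ?thesis unfolding Df_def using F(9) that by simp
  next
    case False then have "0 < w" using that by simp
    then show ?thesis unfolding Df_def using F(10) that False by simp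
  qed
  have aL: "a k \<ge> \<Lambda>" if "1 \<le> k" "k < p" for k
  proof -
    have w: "-1 < z k" "z k < 1" "z k \<noteq> 0" using zin[OF that] pp(2)[OF that] by auto
    show ?thesis
    proof (cases "z k < 0")
      case True
      then have "Df (z k) \<ge> \<Lambda>" unfolding Df_def using L(2) w by simp
      then show ?thesis unfolding a_def by simp
    next
      case False
      then have "Df (z k) \<le> -\<Lambda>" unfolding Df_def using L(3) w by simp
      then show ?thesis unfolding a_def by simp
    qed
  qed
  define m0 where "m0 = min \<bar>dQ {0..1} f 0\<bar> \<bar>dQ {-1..0} f 0\<bar>"
  have Dr0: "dQ {0..1} f 0 \<le> -\<Lambda>" and Dl0: "dQ {-1..0} f 0 \<ge> \<Lambda>" using L(2,3) by auto
  have m0: "m0 \<ge> \<Lambda>" "m0 \<le> -dQ {0..1} f 0" "m0 \<le> dQ {-1..0} f 0"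
    unfolding m0_def using Dr0 Dl0 L(1) by auto
  have "((f^^(p-1)) has_real_derivative (\<Prod>j<p-1. Df (z (Suc j)))) (at (f 0))"
  proof (rule chain_funpow)
    fix j assume j: "j < p - 1"
    have e: "(f^^j) (f 0) = z (Suc j)" unfolding z_def by (simp only: funpow_Suc_right o_apply)
    have k: "1 \<le> Suc j" "Suc j < p" using j by auto
    show "(f has_real_derivative Df (z (Suc j))) (at ((f^^j) (f 0)))"
      unfolding e using Df_der zin[OF k] pp(2)[OF k] by blast
  qed
  then have "deriv (f^^(p-1)) (f 0) = (\<Prod>j<p-1. Df (z (Suc j)))" by (rule DERIV_imp_deriv)
  then have dv: "\<bar>deriv (f^^(p-1)) (f 0)\<bar> = (\<Prod>j<p-1. a (Suc j))" unfolding a_def by (simp add: abs_prod)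
  define PP where "PP = (\<Prod>j<p-1. a (Suc j))"
  have gd': "m0/2 * PP > 1" using gd dv unfolding PP_def m0_def by (simp add: mult.commute)
  define FF where "FF \<tau> = (m0 - \<tau>)/2 * (\<Prod>j<p-1. a (Suc j) - \<tau>)" for \<tau>
  have "(FF \<longlongrightarrow> (m0 - 0)/2 * (\<Prod>j<p-1. a (Suc j) - 0)) (at_right 0)"
    unfolding FF_def by (intro tendsto_intros) auto
  then have "(FF \<longlongrightarrow> m0/2 * PP) (at_right 0)" unfolding PP_def by simp
  then have "eventually (\<lambda>\<tau>. FF \<tau> > 1) (at_right 0)" using gd' order_tendstoD(1) by blast
  then obtain b where b: "b > 0" "\<forall>\<tau>>0. \<tau> < b \<longrightarrow> FF \<tau> > 1" unfolding eventually_at_right_field by blast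
  define \<tau> where "\<tau> = min (b/2) (1/2)"
  have \<tau>: "\<tau> > 0" "\<tau> < 1" "FF \<tau> > 1" using b unfolding \<tau>_def by auto
  define \<eta> where "\<eta> = \<tau>/2"
  have \<eta>: "\<eta> > 0" unfolding \<eta>_def using \<tau> by simp
  define Qr where "Qr k r = (if k = 0 then (r < 1 \<and> (\<forall>y\<in>{0..r}. \<bar>dQ {0..1} f y - dQ {0..1} f 0\<bar> < \<eta>)
      \<and> (\<forall>y\<in>{-r..0}. \<bar>dQ {-1..0} f y - dQ {-1..0} f 0\<bar> < \<eta>))
    else ((z k < 0 \<longrightarrow> -1 < z k - r \<and> z k + r < 0) \<and> (z k > 0 \<longrightarrow> 0 < z k - r \<and> z k + r < 1)
      \<and> (\<forall>y\<in>{z k - r..z k + r}. \<bar>Df y - Df (z k)\<bar> < \<eta>)))" for k r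
  have anti: "Qr k r'" if "0 < r'" "r' \<le> r" "Qr k r" for k r r'
  proof (cases "k = 0")
    case True then show ?thesis using that unfolding Qr_def by auto
  next
    case False
    have "{z k - r'..z k + r'} \<subseteq> {z k - r..z k + r}" using that by auto
    then show ?thesis using that False unfolding Qr_def by auto
  qed
  have ex: "\<forall>k\<in>{0..<p}. \<exists>r>0. Qr k r"
  proof
    fix k assume k: "k \<in> {0..<p}"
    show "\<exists>r>0. Qr k r"
    proof (cases "k = 0")
      case True
      obtain d1 where d1: "d1 > 0" "\<forall>y\<in>{0..1}. dist y 0 < d1 \<longrightarrow> dist (dQ {0..1} f y) (dQ {0..1} f 0) < \<eta>"
        using F(6) \<eta> unfolding continuous_on_iff by (meson atLeastAtMost_iff order_refl zero_le_one)
      obtain d2 where d2: "d2 > 0" "\<forall>y\<in>{-1..0}. dist y 0 < d2 \<longrightarrow> dist (dQ {-1..0} f y) (dQ {-1..0} f 0) < \<eta>"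
        using F(5) \<eta> unfolding continuous_on_iff by (meson atLeastAtMost_iff order_refl neg_le_0_iff_le zero_le_one)
      define r where "r = min (1/2) (min d1 d2 / 2)"
      have r: "r > 0" "r < 1" "r < d1" "r < d2" using d1 d2 unfolding r_def by auto
      have "\<forall>y\<in>{0..r}. \<bar>dQ {0..1} f y - dQ {0..1} f 0\<bar> < \<eta>"
      proof
        fix y assume "y \<in> {0..r}"
        then have "y \<in> {0..1}" "dist y 0 < d1" using r by (auto simp: dist_real_def)
        then show "\<bar>dQ {0..1} f y - dQ {0..1} f 0\<bar> < \<eta>" using d1(2) by (auto simp: dist_real_def)
      qed
      moreover have "\<forall>y\<in>{-r..0}. \<bar>dQ {-1..0} f y - dQ {-1..0} f 0\<bar> < \<eta>"
      proof
        fix y assume "y \<in> {-r..0}"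
        then have "y \<in> {-1..0}" "dist y 0 < d2" using r by (auto simp: dist_real_def)
        then show "\<bar>dQ {-1..0} f y - dQ {-1..0} f 0\<bar> < \<eta>" using d2(2) by (auto simp: dist_real_def)
      qed
      ultimately show ?thesis using r True unfolding Qr_def by (intro exI[of _ r]) auto
    next
      case False
      then have k1: "1 \<le> k" "k < p" using k by auto
      define w where "w = z k"
      have w: "-1 < w" "w < 1" "w \<noteq> 0" using zin[OF k1] pp(2)[OF k1] unfolding w_def by auto
      show ?thesis
      proof (cases "w < 0")
        case True
        have wI: "w \<in> {-1..0}" using w True by auto
        obtain d1 where d1: "d1 > 0" "\<forall>y\<in>{-1..0}. dist y w < d1 \<longrightarrow> dist (dQ {-1..0} f y) (dQ {-1..0} f w) < \<eta>"
          using F(5) \<eta> wI unfolding continuous_on_iff by blast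
        define r where "r = min (d1/2) (min ((w+1)/2) (-w/2))"
        have r0: "r > 0" unfolding r_def using d1 w True by auto
        have rb: "r \<le> d1/2" "r \<le> (w+1)/2" "r \<le> -w/2" unfolding r_def
          by (rule min.cobounded1, rule min.coboundedI2[OF min.cobounded1], rule min.coboundedI2[OF min.cobounded2])
        have ra: "r < d1" using rb(1) r0 d1(1) by (simp add: field_simps)
        have rc: "-1 < w - r" using rb(2) w(1) by (simp add: field_simps)
        have rd: "w + r < 0" using rb(3) True by (simp add: field_simps)
        note r = r0 ra rc rd
        have "\<forall>y\<in>{w - r..w + r}. \<bar>Df y - Df w\<bar> < \<eta>"
        proof
          fix y assume y: "y \<in> {w - r..w + r}"
          then have "y \<in> {-1..0}" "y < 0" "dist y w < d1" using r by (auto simp: dist_real_def)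
          then show "\<bar>Df y - Df w\<bar> < \<eta>" using d1(2) True unfolding Df_def by (auto simp: dist_real_def)
        qed
        then show ?thesis using r True False unfolding Qr_def w_def by (intro exI[of _ r]) auto
      next
        case False
        then have wp: "0 < w" using w by auto
        have wI: "w \<in> {0..1}" using w wp by auto
        obtain d1 where d1: "d1 > 0" "\<forall>y\<in>{0..1}. dist y w < d1 \<longrightarrow> dist (dQ {0..1} f y) (dQ {0..1} f w) < \<eta>"
          using F(6) \<eta> wI unfolding continuous_on_iff by blast
        define r where "r = min (d1/2) (min (w/2) ((1-w)/2))"
        have r0: "r > 0" unfolding r_def using d1 w wp by auto
        have rb: "r \<le> d1/2" "r \<le> w/2" "r \<le> (1-w)/2" unfolding r_def
          by (rule min.cobounded1, rule min.coboundedI2[OF min.cobounded1], rule min.coboundedI2[OF min.cobounded2])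
        have ra: "r < d1" using rb(1) r0 d1(1) by (simp add: field_simps)
        have rc: "0 < w - r" using rb(2) wp by (simp add: field_simps)
        have rd: "w + r < 1" using rb(3) w(2) by (simp add: field_simps)
        note r = r0 ra rc rd
        have "\<forall>y\<in>{w - r..w + r}. \<bar>Df y - Df w\<bar> < \<eta>"
        proof
          fix y assume y: "y \<in> {w - r..w + r}"
          then have "y \<in> {0..1}" "\<not> y < 0" "dist y w < d1" using r by (auto simp: dist_real_def)
          then show "\<bar>Df y - Df w\<bar> < \<eta>" using d1(2) wp unfolding Df_def by (auto simp: dist_real_def)
        qed
        then show ?thesis using r wp \<open>k \<noteq> 0\<close> unfolding Qr_def w_def by (intro exI[of _ r]) auto
      qed
    qed
  qed
  have "\<exists>r>0. \<forall>k\<in>{0..<p}. Qr k r" by (rule finite_radius[OF finite_atLeastLessThan ex anti])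
  then obtain r where r: "r > 0" "\<forall>k\<in>{0..<p}. Qr k r" by blast
  have "Qr 0 r" using r(2) p(1) by simp
  then have Q0: "r < 1" "\<forall>y\<in>{0..r}. \<bar>dQ {0..1} f y - dQ {0..1} f 0\<bar> < \<eta>"
      "\<forall>y\<in>{-r..0}. \<bar>dQ {-1..0} f y - dQ {-1..0} f 0\<bar> < \<eta>"
    unfolding Qr_def by simp_all
  have Qk: "(z k < 0 \<longrightarrow> -1 < z k - r \<and> z k + r < 0) \<and> (z k > 0 \<longrightarrow> 0 < z k - r \<and> z k + r < 1)
      \<and> (\<forall>y\<in>{z k - r..z k + r}. \<bar>Df y - Df (z k)\<bar> < \<eta>)" if "1 \<le> k" "k < p" for k
  proof -
    have "Qr k r" using r(2) that by simp
    moreover have "k \<noteq> 0" using that by simp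
    ultimately show ?thesis unfolding Qr_def by simp
  qed
  obtain \<delta>1 where \<delta>1: "\<delta>1 > 0" "\<forall>g. (\<forall>x\<in>{-1..1}. g x \<in> {-1..1} \<and> \<bar>g x - f x\<bar> < \<delta>1) \<longrightarrow>
            (\<forall>k\<le>p. \<bar>(g^^k) 0 - (f^^k) 0\<bar> < r/2)"
  proof -
    have "r/2 > 0" using r by simp
    from orbit_close[OF peu_basic(1)[OF f] L(5) this, of p] show ?thesis using that by blast
  qed
  define \<delta> where "\<delta> = min \<delta>1 (min (\<tau>/2) ((\<Lambda>-1)/2))"
  have \<delta>0: "\<delta> > 0" unfolding \<delta>_def using \<delta>1(1) L(1) \<tau>(1) by simp
  have \<delta>1': "\<delta> \<le> \<delta>1" unfolding \<delta>_def by (rule min.cobounded1)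
  have \<delta>2': "\<delta> \<le> \<tau>/2" unfolding \<delta>_def by (meson min.cobounded1 min.cobounded2 order_trans)
  have \<delta>3': "\<delta> \<le> (\<Lambda>-1)/2" unfolding \<delta>_def by (meson min.cobounded2 order_trans)
  note \<delta> = \<delta>0 \<delta>1' \<delta>2' \<delta>3'
  define \<epsilon> where "\<epsilon> = r/2"
  have \<epsilon>: "\<epsilon> > 0" using r unfolding \<epsilon>_def by simp
  define l where "l = (\<Lambda>+1)/2"
  have l: "l > 1" "l \<ge> 0" using L(1) unfolding l_def by auto
  define \<theta> where "\<theta> = min l (FF \<tau>)"
  have \<theta>: "\<theta> > 1" "\<theta> \<le> l" "\<theta> \<le> FF \<tau>" using l \<tau> unfolding \<theta>_def by auto
  have "stably_expansive \<epsilon> f"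
    unfolding stably_expansive_def
  proof (intro exI[of _ \<delta>] conjI allI impI)
    show "\<delta> > 0" by fact
    fix g assume gh: "pw_exp_unimodal g \<and> norm1 (\<lambda>x. g x - f x) < \<delta>"
    then have g: "pw_exp_unimodal g" and nd: "norm1 (\<lambda>x. g x - f x) < \<delta>" by auto
    have gexp: "expd l g" and gcl: "\<forall>x\<in>{-1..1}. g x \<in> {-1..1} \<and> \<bar>g x - f x\<bar> < \<delta>"
      using g_setup[OF f g L(1,2,3) nd \<delta>(4)] unfolding l_def by auto
    have "\<forall>x\<in>{-1..1}. g x \<in> {-1..1} \<and> \<bar>g x - f x\<bar> < \<delta>1"
    proof
      fix x :: real assume "x \<in> {-1..1}"
      then have "g x \<in> {-1..1} \<and> \<bar>g x - f x\<bar> < \<delta>" using gcl by blast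
      then show "g x \<in> {-1..1} \<and> \<bar>g x - f x\<bar> < \<delta>1" using \<delta>(2) by auto
    qed
    then have orb: "\<forall>k\<le>p. \<bar>(g^^k) 0 - (f^^k) 0\<bar> < r/2" using \<delta>1(2) by blast
    note CL = close_peu[OF f g]
    have dl: "\<bar>dQ {-1..0} g y - dQ {-1..0} f y\<bar> < \<tau>/2" if "y \<in> {-1..0}" for y
      using CL(2)[OF that] nd \<delta>(3) by linarith
    have dr: "\<bar>dQ {0..1} g y - dQ {0..1} f y\<bar> < \<tau>/2" if "y \<in> {0..1}" for y
      using CL(3)[OF that] nd \<delta>(3) by linarith
    have SL0: "g y - g x \<ge> (m0 - \<tau>)*(y-x)" if "-r \<le> x" "x \<le> y" "y \<le> 0" for x y
    proof (rule slope_left_peu[OF g _ _ _ that])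
      show "-1 \<le> -r" using Q0(1) by simp
      show "(0::real) \<le> 0" by simp
      show "\<forall>y\<in>{-r..0}. dQ {-1..0} g y \<ge> m0 - \<tau>"
      proof
        fix y assume y: "y \<in> {-r..0}"
        then have yI: "y \<in> {-1..0}" using Q0(1) by auto
        have "\<bar>dQ {-1..0} f y - dQ {-1..0} f 0\<bar> < \<eta>" using Q0(3) y by blast
        then show "dQ {-1..0} g y \<ge> m0 - \<tau>" using dl[OF yI] m0(3) unfolding \<eta>_def by linarith
      qed
    qed
    have SR0: "g x - g y \<ge> (m0 - \<tau>)*(y-x)" if "0 \<le> x" "x \<le> y" "y \<le> r" for x y
    proof -
      have "g x - g y \<ge> (-(\<tau> - m0))*(y-x)"
      proof (rule slope_right_peu[OF g _ _ _ that])
        show "(0::real) \<le> 0" by simp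
        show "r \<le> 1" using Q0(1) by simp
        show "\<forall>y\<in>{0..r}. dQ {0..1} g y \<le> \<tau> - m0"
        proof
          fix y assume y: "y \<in> {0..r}"
          then have yI: "y \<in> {0..1}" using Q0(1) by auto
          have "\<bar>dQ {0..1} f y - dQ {0..1} f 0\<bar> < \<eta>" using Q0(2) y by blast
          then show "dQ {0..1} g y \<le> \<tau> - m0" using dr[OF yI] m0(2) unfolding \<eta>_def by linarith
        qed
      qed
      then show ?thesis by simp
    qed
    have Sk: "\<bar>g y - g x\<bar> \<ge> (a k - \<tau>)*(y-x)"
      if k: "1 \<le> k" "k < p" and xy: "z k - r \<le> x" "x \<le> y" "y \<le> z k + r" for k x y
    proof -
      note Q = Qk[OF k]
      have w: "-1 < z k" "z k < 1" "z k \<noteq> 0" using zin[OF k] pp(2)[OF k] by auto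
      show ?thesis
      proof (cases "z k < 0")
        case True
        have side: "-1 < z k - r" "z k + r < 0" using Q True by auto
        have "g y - g x \<ge> (a k - \<tau>)*(y-x)"
        proof (rule slope_left_peu[OF g _ _ _ xy])
          show "-1 \<le> z k - r" "z k + r \<le> 0" using side by auto
          show "\<forall>y\<in>{z k - r..z k + r}. dQ {-1..0} g y \<ge> a k - \<tau>"
          proof
            fix y assume y: "y \<in> {z k - r..z k + r}"
            then have yI: "y \<in> {-1..0}" "y < 0" using side by auto
            have "\<bar>Df y - Df (z k)\<bar> < \<eta>" using Q y by blast
            then have "\<bar>dQ {-1..0} f y - dQ {-1..0} f (z k)\<bar> < \<eta>" unfolding Df_def using yI(2) True by simp
            moreover have "dQ {-1..0} f (z k) \<ge> \<Lambda>" using True L(2) w by simp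
            then have "a k = dQ {-1..0} f (z k)" unfolding a_def Df_def using True L(1) by simp
            ultimately show "dQ {-1..0} g y \<ge> a k - \<tau>" using dl[OF yI(1)] unfolding \<eta>_def by linarith
          qed
        qed
        then show ?thesis by linarith
      next
        case False
        then have wp: "0 < z k" using w by auto
        have side: "0 < z k - r" "z k + r < 1" using Q wp by auto
        have "g x - g y \<ge> (-(\<tau> - a k))*(y-x)"
        proof (rule slope_right_peu[OF g _ _ _ xy])
          show "0 \<le> z k - r" "z k + r \<le> 1" using side by auto
          show "\<forall>y\<in>{z k - r..z k + r}. dQ {0..1} g y \<le> \<tau> - a k"
          proof
            fix y assume y: "y \<in> {z k - r..z k + r}"
            then have yI: "y \<in> {0..1}" "\<not> y < 0" using side by auto
            have "\<bar>Df y - Df (z k)\<bar> < \<eta>" using Q y by blast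
            then have "\<bar>dQ {0..1} f y - dQ {0..1} f (z k)\<bar> < \<eta>" unfolding Df_def using yI(2) False by simp
            moreover have "dQ {0..1} f (z k) \<le> -\<Lambda>" using L(3) w wp by simp
            then have "a k = - dQ {0..1} f (z k)" unfolding a_def Df_def using False L(1) by simp
            ultimately show "dQ {0..1} g y \<le> \<tau> - a k" using dr[OF yI(1)] unfolding \<eta>_def by linarith
          qed
        qed
        then have "g x - g y \<ge> (a k - \<tau>)*(y-x)" by (simp add: algebra_simps)
        moreover have "\<bar>g y - g x\<bar> \<ge> g x - g y" by (metis abs_ge_minus_self minus_diff_eq)
        ultimately show ?thesis by linarith
      qed
    qed
    show "expansive \<epsilon> g"
    proof (rule expansive_crit[OF gexp l(2) \<epsilon> \<theta>(1)])
      fix a' b :: real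
      assume ab: "a' < b" "{a'..b} \<subseteq> {-1..1}" and bnd: "\<forall>n. diameter ((g^^n)`{a'..b}) \<le> \<epsilon>"
      define J where "J n = (g^^n)`{a'..b}" for n
      have Jint: "\<exists>p q. J n = {p..q} \<and> p \<le> q \<and> {p..q} \<subseteq> {-1..1}" for n
        using expd_J_interval[OF gexp l(2) ab(2)] ab(1) unfolding J_def by auto
      have Jlen: "diameter (J n) \<le> \<epsilon>" for n using bnd unfolding J_def by blast
      show "\<forall>i. \<exists>j>i. diameter ((g^^j)`{a'..b}) \<ge> \<theta> * diameter ((g^^i)`{a'..b})"
      proof
        fix i
        obtain u v where uv: "J i = {u..v}" "u \<le> v" "{u..v} \<subseteq> {-1..1}" using Jint by blast
        have dJi: "diameter (J i) = v - u" using uv by simp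
        show "\<exists>j>i. diameter ((g^^j)`{a'..b}) \<ge> \<theta> * diameter ((g^^i)`{a'..b})"
        proof (cases "{u..v} \<subseteq> {-1..0} \<or> {u..v} \<subseteq> {0..1}")
          case True
          have "diameter (J (Suc i)) = diameter (g ` {u..v})" using uv(1) unfolding J_def
            by (simp only: funpow_img_Suc)
          also have "\<dots> \<ge> l * (v - u)" using step_one[OF gexp uv(2) True] .
          finally have X: "diameter (J (Suc i)) \<ge> l * (v - u)" .
          have "\<theta> * (v-u) \<le> l*(v-u)" using \<theta>(2) uv(2) by (intro mult_right_mono) auto
          moreover have "\<theta> * diameter (J i) = \<theta>*(v-u)" using dJi by simp
          ultimately have "diameter (J (Suc i)) \<ge> \<theta> * diameter (J i)" using X by linarith
          then show ?thesis unfolding J_def by (intro exI[of _ "Suc i"]) auto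
        next
          case False
          then have uv0: "u < 0" "0 < v" using uv(3) by auto
          have Ji: "(g^^i)`{a'..b} = {u..v}" using uv(1) unfolding J_def .
          have zi: "0 \<in> {u..v}" using uv0 by simp
          have "v - u \<le> \<epsilon>" using Jlen[of i] dJi by simp
          then have uvr: "-r \<le> u" "v \<le> r" using uv0 unfolding \<epsilon>_def by auto
          have fold: "diameter (J (Suc i)) \<ge> (m0 - \<tau>)/2 * (v - u)"
          proof -
            have JS: "J (Suc i) = g ` {u..v}" using uv(1) unfolding J_def by (simp only: funpow_img_Suc)
            have "\<bar>g 0 - g u\<bar> \<le> diameter (g ` {u..v})" "\<bar>g 0 - g v\<bar> \<le> diameter (g ` {u..v})"
              using diam_img_ge[OF gexp uv(3)] uv0 by auto
            moreover have "g 0 - g u \<ge> (m0 - \<tau>)*(0-u)" using SL0[of u 0] uvr uv0 by simp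
            moreover have "g 0 - g v \<ge> (m0 - \<tau>)*(v-0)" using SR0[of 0 v] uvr uv0 by simp
            ultimately have "2 * diameter (g ` {u..v}) \<ge> (m0 - \<tau>)*(0-u) + (m0 - \<tau>)*(v-0)" by linarith
            then have "2 * diameter (g ` {u..v}) \<ge> (m0 - \<tau>) * (v-u)" by (simp add: algebra_simps)
            then show ?thesis using JS by simp
          qed
          have steps: "\<forall>j<p-1. \<exists>P Q. (g^^(Suc i + j))`{a'..b} = {P..Q} \<and> P \<le> Q \<and>
              \<bar>g Q - g P\<bar> \<ge> (a (Suc j) - \<tau>) * (Q-P)"
          proof (intro allI impI)
            fix j assume j: "j < p - 1"
            have k: "1 \<le> Suc j" "Suc j < p" using j by auto
            obtain P Q where PQ: "J (i + Suc j) = {P..Q}" "P \<le> Q" "{P..Q} \<subseteq> {-1..1}" using Jint by blast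
            have "(g^^Suc j) 0 \<in> J (i + Suc j)" unfolding J_def using orbit_in_J[OF Ji zi] .
            then have zin': "(g^^Suc j) 0 \<in> {P..Q}" using PQ(1) by simp
            have "Suc j \<le> p" using k(2) by simp
            then have "\<bar>(g^^Suc j) 0 - (f^^Suc j) 0\<bar> < r/2" using orb by blast
            then have "\<bar>(g^^Suc j) 0 - z (Suc j)\<bar> < r/2" unfolding z_def .
            moreover have "Q - P \<le> r/2" using Jlen[of "i + Suc j"] PQ(1,2) unfolding \<epsilon>_def by simp
            ultimately have A: "\<bar>(g^^Suc j) 0 - z (Suc j)\<bar> < r/2" and B: "Q - P \<le> r/2" by blast+
            have A1: "(g^^Suc j) 0 - z (Suc j) < r/2" using A by (rule order.strict_trans1[OF abs_ge_self])
            have A2: "z (Suc j) - (g^^Suc j) 0 < r/2" using A by (metis abs_minus_commute abs_ge_self order.strict_trans1)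
            have C: "P \<le> (g^^Suc j) 0" "(g^^Suc j) 0 \<le> Q" using zin' by auto
            have "z (Suc j) - r \<le> P" using A2 B C(2) by linarith
            moreover have "Q \<le> z (Suc j) + r" using A1 B C(1) by linarith
            ultimately have "z (Suc j) - r \<le> P" "Q \<le> z (Suc j) + r" by blast+
            then have "\<bar>g Q - g P\<bar> \<ge> (a (Suc j) - \<tau>) * (Q-P)" using Sk[OF k _ PQ(2)] by blast
            moreover have "(g^^(Suc i + j))`{a'..b} = {P..Q}" using PQ(1) unfolding J_def by simp
            ultimately show "\<exists>P Q. (g^^(Suc i + j))`{a'..b} = {P..Q} \<and> P \<le> Q \<and>
              \<bar>g Q - g P\<bar> \<ge> (a (Suc j) - \<tau>) * (Q-P)" using PQ(2) by blast
          qed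
          have cpos: "\<forall>j<p-1. a (Suc j) - \<tau> \<ge> 0"
          proof (intro allI impI)
            fix j assume "j < p - 1"
            then have "a (Suc j) \<ge> \<Lambda>" using aL by auto
            then show "a (Suc j) - \<tau> \<ge> 0" using L(1) \<tau>(2) by linarith
          qed
          have "diameter ((g^^(Suc i + (p-1)))`{a'..b}) \<ge> (\<Prod>j<p-1. a (Suc j) - \<tau>) * diameter ((g^^(Suc i))`{a'..b})"
            by (rule block_prod[OF gexp l(2) ab(2) steps cpos])
          moreover have "(\<Prod>j<p-1. a (Suc j) - \<tau>) \<ge> 0" using cpos by (intro prod_nonneg) auto
          then have "(\<Prod>j<p-1. a (Suc j) - \<tau>) * diameter ((g^^(Suc i))`{a'..b}) \<ge>
              (\<Prod>j<p-1. a (Suc j) - \<tau>) * ((m0 - \<tau>)/2 * (v - u))"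
            using fold unfolding J_def by (intro mult_left_mono) auto
          moreover have "(\<Prod>j<p-1. a (Suc j) - \<tau>) * ((m0 - \<tau>)/2 * (v - u)) = FF \<tau> * (v - u)"
            unfolding FF_def by (simp add: mult_ac)
          moreover have "FF \<tau> * (v - u) \<ge> \<theta> * (v - u)" using \<theta>(3) uv(2) by (intro mult_right_mono) auto
          moreover have "\<theta> * diameter ((g^^i)`{a'..b}) = \<theta>*(v-u)" using dJi unfolding J_def by simp
          moreover have "Suc i + (p-1) = i + p" using p(1) by simp
          ultimately have "diameter ((g^^(i+p))`{a'..b}) \<ge> \<theta> * diameter ((g^^i)`{a'..b})"
            by (smt (verit))
          then show ?thesis using p(1) by (intro exI[of _ "i+p"]) auto
        qed
      qed
    qed
  qed
  then show ?thesis using \<epsilon> by blast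
qed

theorem proposition2p1:
  fixes f :: "real \<Rightarrow> real"
  assumes "pw_exp_unimodal f"
  shows "(\<exists>\<epsilon>>0. expansive \<epsilon> f) \<and> (good f \<longrightarrow> (\<exists>\<epsilon>>0. stably_expansive \<epsilon> f))"
proof
  obtain \<Lambda> where "\<Lambda> > 1" "expd \<Lambda> f" using peu_expd[OF assms] by blast
  then show "\<exists>\<epsilon>>0. expansive \<epsilon> f" using part1 by blast
  show "good f \<longrightarrow> (\<exists>\<epsilon>>0. stably_expansive \<epsilon> f)"
  proof
    assume "good f"
    then consider "\<not> periodic_pt f 0" | p where "p \<ge> 2" "prime_period f 0 p"
      "\<bar>deriv (f ^^ (p - 1)) (f 0)\<bar> * min \<bar>dQ {0..1} f 0\<bar> \<bar>dQ {-1..0} f 0\<bar> > 2"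
      unfolding good_def by blast
    then show "\<exists>\<epsilon>>0. stably_expansive \<epsilon> f"
    proof cases
      case 1 then show ?thesis using part2_np[OF assms] by blast
    next
      case 2 then show ?thesis using part2_per[OF assms] by blast
    qed
  qed
qed

end
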